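(* Let $0<\alpha<1$ and $p,q>0$. If $\mathrm{Tr}\,SG_{\alpha,p}(A,B)\le\mathrm{Tr}\,\mathcal{A}_{\alpha,q}(A,B)$ holds for all positive definite $2\times2$ matrices $A,B$, then $\min\{1,p/2\}\le q$.
   Context: For positive definite $A,B$: $A\#B:=A^{1/2}(A^{-1/2}BA^{-1/2})^{1/2}A^{1/2}$; $F_\alpha(A,B):=(A^{-1}\#B)^\alpha A(A^{-1}\#B)^\alpha$; $SG_{\alpha,p}(A,B):=F_\alpha(A^p,B^p)^{1/p}$; $\mathcal{A}_{\alpha,q}(A,B):=((1-\alpha)A^q+\alpha B^q)^{1/q}$. $\mathrm{Tr}$ is the usual trace. *)

theory Defs
  imports "HOL-Analysis.Analysis" "HOL-Library.Numeral_Type"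
begin

definition cadj :: "complex^'n^'n \<Rightarrow> complex^'n^'n" where
  "cadj A = (\<chi> i j. cnj (A $ j $ i))"

definition posdef :: "complex^'n^'n \<Rightarrow> bool" where
  "posdef A \<longleftrightarrow> cadj A = A \<and>
     (\<forall>x::complex^'n. x \<noteq> 0 \<longrightarrow> 0 < Re (\<Sum>i\<in>UNIV. cnj (x $ i) * (A *v x) $ i))"

definition unitary :: "complex^'n^'n \<Rightarrow> bool" where
  "unitary U \<longleftrightarrow> U ** cadj U = mat 1 \<and> cadj U ** U = mat 1"

definition rdiag :: "('n \<Rightarrow> real) \<Rightarrow> complex^'n^'n" where
  "rdiag d = (\<chi> i j. if i = j then complex_of_real (d i) else 0)"

definition mpow :: "complex^'n^'n \<Rightarrow> real \<Rightarrow> complex^'n^'n" where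
  "mpow A r = (SOME B. \<exists>U d. unitary U \<and> (\<forall>i. 0 < d i) \<and>
       A = U ** rdiag d ** cadj U \<and> B = U ** rdiag (\<lambda>i. d i powr r) ** cadj U)"

definition gmean :: "complex^'n^'n \<Rightarrow> complex^'n^'n \<Rightarrow> complex^'n^'n" where
  "gmean A B = mpow A (1/2) ** mpow (mpow A (-1/2) ** B ** mpow A (-1/2)) (1/2) ** mpow A (1/2)"

definition Falpha :: "real \<Rightarrow> complex^'n^'n \<Rightarrow> complex^'n^'n \<Rightarrow> complex^'n^'n" where
  "Falpha \<alpha> A B = mpow (gmean (matrix_inv A) B) \<alpha> ** A ** mpow (gmean (matrix_inv A) B) \<alpha>"

definition SG :: "real \<Rightarrow> real \<Rightarrow> complex^'n^'n \<Rightarrow> complex^'n^'n \<Rightarrow> complex^'n^'n" where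
  "SG \<alpha> p A B = mpow (Falpha \<alpha> (mpow A p) (mpow B p)) (1/p)"

definition AM :: "real \<Rightarrow> real \<Rightarrow> complex^'n^'n \<Rightarrow> complex^'n^'n \<Rightarrow> complex^'n^'n" where
  "AM \<alpha> q A B = mpow ((1 - \<alpha>) *\<^sub>R mpow A q + \<alpha> *\<^sub>R mpow B q) (1/q)"

end

theory Submission
  imports Defs
begin

definition rm :: "real \<Rightarrow> real \<Rightarrow> real \<Rightarrow> real \<Rightarrow> complex^2^2" where
  "rm a b c d = (\<chi> i j. complex_of_real (if i = 1 then (if j = 1 then a else b) else (if j = 1 then c else d)))"

lemma rm_nth [simp]:
  "rm a b c d $ 1 $ 1 = a" "rm a b c d $ 1 $ 2 = b" "rm a b c d $ 2 $ 1 = c" "rm a b c d $ 2 $ 2 = d"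
  by (simp_all add: rm_def)

lemma m2_eqI: "(A::'a^2^2) $ 1 $ 1 = B $ 1 $ 1 \<Longrightarrow> A $ 1 $ 2 = B $ 1 $ 2 \<Longrightarrow>
   A $ 2 $ 1 = B $ 2 $ 1 \<Longrightarrow> A $ 2 $ 2 = B $ 2 $ 2 \<Longrightarrow> A = B"
  by (simp add: vec_eq_iff forall_2)

lemma rm_mult [simp]: "rm a b c d ** rm a' b' c' d' = rm (a*a'+b*c') (a*b'+b*d') (c*a'+d*c') (c*b'+d*d')"
  by (rule m2_eqI) (simp_all add: matrix_matrix_mult_def sum_2)

lemma rm_add [simp]: "rm a b c d + rm a' b' c' d' = rm (a+a') (b+b') (c+c') (d+d')"
  by (rule m2_eqI) simp_all

lemma rm_scaleR [simp]: "r *\<^sub>R rm a b c d = rm (r*a) (r*b) (r*c) (r*d)"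
  by (rule m2_eqI) (simp_all add: scaleR_conv_of_real scaleR_vec_def)

lemma rm_cadj [simp]: "cadj (rm a b c d) = rm a c b d"
  by (rule m2_eqI) (simp_all add: cadj_def)

lemma rm_one: "mat 1 = rm 1 0 0 1"
  by (rule m2_eqI) (simp_all add: mat_def)

lemma rdiag_rm: "rdiag (d::2\<Rightarrow>real) = rm (d 1) 0 0 (d 2)"
  by (rule m2_eqI) (simp_all add: rdiag_def)

lemma rm_trace [simp]: "trace (rm a b c d) = complex_of_real (a + d)"
  by (simp add: trace_def sum_2)

lemma rm_det [simp]: "det (rm a b c d) = complex_of_real (a*d - b*c)"
  by (simp add: det_2)

lemma rm_eq_iff [simp]: "rm a b c d = rm a' b' c' d' \<longleftrightarrow> a = a' \<and> b = b' \<and> c = c' \<and> d = d'"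
proof
  assume "rm a b c d = rm a' b' c' d'"
  then have "rm a b c d $ i $ j = rm a' b' c' d' $ i $ j" for i j by simp
  from this[of 1 1] this[of 1 2] this[of 2 1] this[of 2 2] show "a = a' \<and> b = b' \<and> c = c' \<and> d = d'" by simp
qed simp

lemma rdiag_right: "(X ** rdiag f) $ i $ j = X $ i $ j * complex_of_real (f j)"
  by (simp add: matrix_matrix_mult_def rdiag_def if_distrib[where f="\<lambda>x. _ * x"] sum.delta cong: if_cong)

lemma rdiag_left: "(rdiag f ** X) $ i $ j = complex_of_real (f i) * X $ i $ j"
  by (simp add: matrix_matrix_mult_def rdiag_def if_distrib[where f="\<lambda>x. x * _"] sum.delta cong: if_cong)

lemma mpow_unique_aux:
  fixes U V :: "complex^'n^'n"
  assumes U: "unitary U" and V: "unitary V" and d: "\<forall>i. 0 < d i" and e: "\<forall>i. 0 < e i"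
    and eq: "U ** rdiag d ** cadj U = V ** rdiag e ** cadj V"
  shows "U ** rdiag (\<lambda>i. d i powr r) ** cadj U = V ** rdiag (\<lambda>i. e i powr r) ** cadj V"
proof -
  define W where "W = cadj V ** U"
  have UU: "U ** cadj U = mat 1" "cadj U ** U = mat 1" and VV: "V ** cadj V = mat 1" "cadj V ** V = mat 1"
    using U V by (auto simp: unitary_def)
  have "cadj V ** (U ** rdiag d ** cadj U) ** U = cadj V ** (V ** rdiag e ** cadj V) ** U"
    using eq by simp
  hence WD: "W ** rdiag d = rdiag e ** W"
    by (simp add: W_def matrix_mul_assoc VV UU) (metis UU(2) VV(2) matrix_mul_assoc matrix_mul_lid matrix_mul_rid)
  have WDr: "W ** rdiag (\<lambda>i. d i powr r) = rdiag (\<lambda>i. e i powr r) ** W"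
  proof -
    { fix i j
      have "(W ** rdiag d) $ i $ j = (rdiag e ** W) $ i $ j" using WD by simp
      hence h: "W $ i $ j * complex_of_real (d j) = complex_of_real (e i) * W $ i $ j"
        by (simp add: rdiag_right rdiag_left)
      have "W $ i $ j * complex_of_real (d j powr r) = complex_of_real (e i powr r) * W $ i $ j"
      proof (cases "W $ i $ j = 0")
        case False
        with h have "d j = e i" by (simp add: mult.commute)
        thus ?thesis by (simp add: mult.commute)
      qed simp
      hence "(W ** rdiag (\<lambda>i. d i powr r)) $ i $ j = (rdiag (\<lambda>i. e i powr r) ** W) $ i $ j"
        by (simp add: rdiag_right rdiag_left) }
    thus ?thesis by (simp add: vec_eq_iff)
  qed
  have "U ** rdiag (\<lambda>i. d i powr r) ** cadj U = (V ** cadj V) ** U ** rdiag (\<lambda>i. d i powr r) ** cadj U"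
    by (simp add: VV)
  also have "\<dots> = V ** (W ** rdiag (\<lambda>i. d i powr r)) ** cadj U"
    by (simp add: W_def matrix_mul_assoc)
  also have "\<dots> = V ** rdiag (\<lambda>i. e i powr r) ** (W ** cadj U)"
    by (simp add: WDr matrix_mul_assoc)
  also have "W ** cadj U = cadj V"
    by (simp add: W_def matrix_mul_assoc[symmetric] UU)
  finally show ?thesis .
qed

lemma mpow_eq:
  fixes U :: "complex^'n^'n"
  assumes U: "unitary U" and d: "\<forall>i. 0 < d i" and M: "M = U ** rdiag d ** cadj U"
  shows "mpow M r = U ** rdiag (\<lambda>i. d i powr r) ** cadj U"
proof -
  let ?P = "\<lambda>B. \<exists>U d. unitary U \<and> (\<forall>i. 0 < d i) \<and>
       M = U ** rdiag d ** cadj U \<and> B = U ** rdiag (\<lambda>i. d i powr r) ** cadj U"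
  have "?P (U ** rdiag (\<lambda>i. d i powr r) ** cadj U)" using assms by blast
  hence "?P (mpow M r)" unfolding mpow_def by (rule someI)
  then obtain V e where V: "unitary V" "\<forall>i. 0 < e i" "M = V ** rdiag e ** cadj V"
    and B: "mpow M r = V ** rdiag (\<lambda>i. e i powr r) ** cadj V" by blast
  show ?thesis unfolding B
    by (rule mpow_unique_aux[OF V(1) U V(2) d]) (use V(3) M in simp)
qed

definition rot :: "real \<Rightarrow> real \<Rightarrow> complex^2^2" where "rot x y = rm x (-y) y x"
definition diag2 :: "real \<Rightarrow> real \<Rightarrow> 2 \<Rightarrow> real" where "diag2 l1 l2 = (\<lambda>i. if i = 1 then l1 else l2)"

lemma diag2_simps [simp]: "diag2 l1 l2 1 = l1" "diag2 l1 l2 2 = l2"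
  by (simp_all add: diag2_def)

lemma rot_unitary: "x^2 + y^2 = 1 \<Longrightarrow> unitary (rot x y)"
  by (simp add: unitary_def rot_def rm_one power2_eq_square algebra_simps)

lemma conj_rot: "rot x y ** rdiag f ** cadj (rot x y) =
   rm (x^2 * f 1 + y^2 * f 2) (x*y*(f 1 - f 2)) (x*y*(f 1 - f 2)) (y^2 * f 1 + x^2 * f 2)"
  by (simp add: rot_def rdiag_rm power2_eq_square algebra_simps)

definition lamp :: "real \<Rightarrow> real \<Rightarrow> real" where "lamp T D = (T + sqrt (T^2 - 4*D)) / 2"
definition lamm :: "real \<Rightarrow> real \<Rightarrow> real" where "lamm T D = (T - sqrt (T^2 - 4*D)) / 2"

lemma spectral2:
  assumes a: "0 < a" and ab: "c^2 < a * b"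
  shows "\<exists>x y. x^2 + y^2 = 1 \<and>
     rm a c c b = rot x y ** rdiag (diag2 (lamp (a+b) (a*b-c^2)) (lamm (a+b) (a*b-c^2))) ** cadj (rot x y)"
proof -
  define sq where "sq = sqrt ((a+b)^2 - 4*(a*b-c^2))"
  have disc: "(a+b)^2 - 4*(a*b-c^2) = (a-b)^2 + 4*c^2" by (simp add: power2_eq_square algebra_simps)
  have sq2: "sq^2 = (a-b)^2 + 4*c^2" unfolding sq_def disc by simp
  have sq0: "sq \<ge> 0" unfolding sq_def disc by simp
  define l1 where "l1 = lamp (a+b) (a*b-c^2)"
  define l2 where "l2 = lamm (a+b) (a*b-c^2)"
  have l1: "l1 = (a+b+sq)/2" and l2: "l2 = (a+b-sq)/2" unfolding l1_def l2_def lamp_def lamm_def sq_def by simp_all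
  show ?thesis
  proof (cases "c = 0")
    case True
    show ?thesis
    proof (cases "b \<le> a")
      case True
      with \<open>c=0\<close> have "sq = a - b" unfolding sq_def disc by simp
      hence "l1 = a" "l2 = b" using l1 l2 by simp_all
      thus ?thesis using \<open>c=0\<close> by (intro exI[of _ 1] exI[of _ 0]) (simp add: conj_rot l1_def l2_def)
    next
      case False
      with \<open>c=0\<close> have "sq = b - a" unfolding sq_def disc by simp
      hence "l1 = b" "l2 = a" using l1 l2 by simp_all
      thus ?thesis using \<open>c=0\<close> by (intro exI[of _ 0] exI[of _ 1]) (simp add: conj_rot l1_def l2_def)
    qed
  next
    case False
    have key: "(l1 - a) * (l1 - b) = c^2" using sq2 unfolding l1
      by (simp add: power2_eq_square algebra_simps) (simp add: field_simps)
    have "l1 \<noteq> a" using key False by auto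
    have "(a-b)^2 + 4*c^2 > 0" using False by (simp add: add_nonneg_pos)
    hence sqpos: "sq > 0" using sq0 sq2 by (cases "sq = 0") auto
    define n where "n = sqrt (c^2 + (l1 - a)^2)"
    have n2: "n^2 = c^2 + (l1-a)^2" unfolding n_def by simp
    have n2': "n^2 = (l1 - a) * sq"
      using key unfolding n2 l1 by (simp add: power2_eq_square algebra_simps) (simp add: field_simps)
    have npos: "n > 0" unfolding n_def using False by (simp add: add_pos_nonneg)
    define x where "x = c / n"
    define y where "y = (l1 - a) / n"
    have xy: "x^2 + y^2 = 1"
    proof -
      have "x^2 + y^2 = (c^2 + (l1-a)^2) / n^2" by (simp add: x_def y_def power_divide add_divide_distrib)
      thus ?thesis using n2 npos False by simp
    qed
    have l12: "l1 - l2 = sq" "l1 + l2 = a + b" using l1 l2 by simp_all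
    have e1: "x^2 * l1 + y^2 * l2 = a"
    proof -
      have "x^2 * l1 + y^2 * l2 = (c^2 * l1 + (l1-a)^2 * l2) / n^2"
        by (simp add: x_def y_def power_divide add_divide_distrib)
      also have "c^2 * l1 + (l1-a)^2 * l2 = (l1 - a) * ((l1 - b) * l1 + (l1 - a) * l2)"
        unfolding key[symmetric] by (simp add: power2_eq_square algebra_simps)
      also have "(l1 - b) * l1 + (l1 - a) * l2 = a * sq" using l12
      proof -
        have bb: "b = l1 + l2 - a" and ss: "sq = l1 - l2" using l12 by simp_all
        show ?thesis unfolding bb ss by (simp add: algebra_simps)
      qed
      also have "(l1 - a) * (a * sq) / n^2 = a"
        unfolding n2' using \<open>l1 \<noteq> a\<close> sqpos by simp
      finally show ?thesis .
    qed
    have e2: "x*y*(l1 - l2) = c"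
    proof -
      have "x*y*(l1-l2) = c * ((l1 - a) * sq) / n^2" by (simp add: x_def y_def l12 power2_eq_square)
      also have "\<dots> = c" unfolding n2' using \<open>l1 \<noteq> a\<close> sqpos by simp
      finally show ?thesis .
    qed
    have e3: "y^2 * l1 + x^2 * l2 = b"
    proof -
      have "x^2 * l1 + y^2 * l2 + (y^2 * l1 + x^2 * l2) = (x^2+y^2) * (l1 + l2)" by (simp add: algebra_simps)
      thus ?thesis using e1 xy l12 by simp
    qed
    show ?thesis
      by (intro exI[of _ x] exI[of _ y]) (simp add: conj_rot xy e1 e2 e3 l1_def[symmetric] l2_def[symmetric])
  qed
qed

lemma quad_pos:
  fixes a b c u w :: real
  assumes "0 < a" "c^2 < a*b"
  shows "0 \<le> a*u^2 + 2*c*u*w + b*w^2" and "(u \<noteq> 0 \<or> w \<noteq> 0) \<Longrightarrow> 0 < a*u^2 + 2*c*u*w + b*w^2"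
proof -
  have id: "a * (a*u^2 + 2*c*u*w + b*w^2) = (a*u + c*w)^2 + (a*b - c^2)*w^2"
    by (simp add: power2_eq_square algebra_simps)
  have "0 \<le> (a*u + c*w)^2 + (a*b - c^2)*w^2" using assms by simp
  thus "0 \<le> a*u^2 + 2*c*u*w + b*w^2" using id assms(1)
    by (metis zero_le_mult_iff linorder_not_le)
  assume uv: "u \<noteq> 0 \<or> w \<noteq> 0"
  have "0 < (a*u + c*w)^2 + (a*b - c^2)*w^2"
  proof (cases "w = 0")
    case True thus ?thesis using uv assms by simp
  next
    case False thus ?thesis using assms by (simp add: add_nonneg_pos)
  qed
  thus "0 < a*u^2 + 2*c*u*w + b*w^2" using id assms(1)
    by (metis zero_less_mult_iff linorder_not_le less_le)
qed

lemma posdef_rm: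
  assumes a: "0 < a" and ab: "c^2 < a*b"
  shows "posdef (rm a c c b)"
  unfolding posdef_def
proof (intro conjI allI impI)
  show "cadj (rm a c c b) = rm a c c b" by simp
  fix x :: "complex^2" assume "x \<noteq> 0"
  then have nz: "x$1 \<noteq> 0 \<or> x$2 \<noteq> 0" by (simp add: vec_eq_iff forall_2)
  define p1 where "p1 = Re (x$1)" define q1 where "q1 = Im (x$1)"
  define p2 where "p2 = Re (x$2)" define q2 where "q2 = Im (x$2)"
  have "Re (\<Sum>i\<in>UNIV. cnj (x $ i) * (rm a c c b *v x) $ i) =
      (a*p1^2 + 2*c*p1*p2 + b*p2^2) + (a*q1^2 + 2*c*q1*q2 + b*q2^2)"
    by (simp add: sum_2 matrix_vector_mult_def p1_def q1_def p2_def q2_def power2_eq_square algebra_simps)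
  moreover have "0 \<le> a*p1^2 + 2*c*p1*p2 + b*p2^2" "0 \<le> a*q1^2 + 2*c*q1*q2 + b*q2^2"
    using quad_pos(1)[OF a ab] by auto
  moreover have "0 < a*p1^2 + 2*c*p1*p2 + b*p2^2 \<or> 0 < a*q1^2 + 2*c*q1*q2 + b*q2^2"
  proof -
    have "p1 \<noteq> 0 \<or> p2 \<noteq> 0 \<or> q1 \<noteq> 0 \<or> q2 \<noteq> 0" using nz
      by (auto simp: p1_def q1_def p2_def q2_def complex_eq_iff)
    thus ?thesis using quad_pos(2)[OF a ab] by blast
  qed
  ultimately show "0 < Re (\<Sum>i\<in>UNIV. cnj (x $ i) * (rm a c c b *v x) $ i)" by linarith
qed

lemma lam_sum: "lamp T D + lamm T D = T" unfolding lamp_def lamm_def by argo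
lemma lam_diff: "lamp T D - lamm T D = sqrt (T^2 - 4*D)" unfolding lamp_def lamm_def by argo
lemma lam_prod: "T^2 \<ge> 4*D \<Longrightarrow> lamp T D * lamm T D = D"
proof -
  assume h: "T^2 \<ge> 4*D"
  have "lamp T D * lamm T D = (T^2 - (sqrt (T^2 - 4*D))^2)/4" unfolding lamp_def lamm_def by (simp add: power2_eq_square algebra_simps)
  also have "\<dots> = D" using h by simp
  finally show ?thesis .
qed
lemma lam_le: "4*D \<le> T^2 \<Longrightarrow> lamm T D \<le> lamp T D" unfolding lamp_def lamm_def by simp
lemma lamm_pos: "0 < T \<Longrightarrow> 0 < D \<Longrightarrow> 0 < lamm T D"
proof -
  assume T: "0 < T" and D: "0 < D"
  have "sqrt (T^2 - 4*D) < sqrt (T^2)" using D by (intro real_sqrt_less_mono) simp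
  also have "\<dots> = T" using T by simp
  finally show ?thesis unfolding lamm_def by simp
qed

lemma lam_props:
  assumes a: "0 < a" and ab: "c^2 < a*b"
  shows "0 < lamm (a+b) (a*b-c^2)" "lamm (a+b) (a*b-c^2) \<le> lamp (a+b) (a*b-c^2)"
    "lamp (a+b) (a*b-c^2) + lamm (a+b) (a*b-c^2) = a + b"
    "lamp (a+b) (a*b-c^2) * lamm (a+b) (a*b-c^2) = a*b - c^2"
    "lamp (a+b) (a*b-c^2) - lamm (a+b) (a*b-c^2) = sqrt ((a-b)^2 + 4*c^2)"
proof -
  have disc: "(a+b)^2 - 4*(a*b-c^2) = (a-b)^2 + 4*c^2" by (simp add: power2_eq_square algebra_simps)
  have b: "0 < b"
  proof (rule ccontr)
    assume "\<not> 0 < b"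
    hence "a*b \<le> 0" using a by (simp add: mult_nonneg_nonpos)
    thus False using ab zero_le_power2[of c] by linarith
  qed
  show "0 < lamm (a+b) (a*b-c^2)" using a b ab by (intro lamm_pos) auto
  have dd: "4*(a*b-c^2) \<le> (a+b)^2" using disc zero_le_power2[of "a-b"] zero_le_power2[of c] by linarith
  show "lamm (a+b) (a*b-c^2) \<le> lamp (a+b) (a*b-c^2)" by (rule lam_le[OF dd])
  show "lamp (a+b) (a*b-c^2) + lamm (a+b) (a*b-c^2) = a + b" by (rule lam_sum)
  show "lamp (a+b) (a*b-c^2) - lamm (a+b) (a*b-c^2) = sqrt ((a-b)^2 + 4*c^2)" unfolding lam_diff disc ..
  show "lamp (a+b) (a*b-c^2) * lamm (a+b) (a*b-c^2) = a*b - c^2"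
    by (rule lam_prod[OF dd])
qed

lemma mpow_rm_conj:
  assumes a: "0 < a" and ab: "c^2 < a*b"
  shows "\<exists>x y. x^2 + y^2 = 1 \<and> mpow (rm a c c b) r =
     rot x y ** rdiag (diag2 (lamp (a+b) (a*b-c^2) powr r) (lamm (a+b) (a*b-c^2) powr r)) ** cadj (rot x y)"
proof -
  obtain x y where xy: "x^2 + y^2 = 1" and M: "rm a c c b = rot x y ** rdiag (diag2 (lamp (a+b) (a*b-c^2)) (lamm (a+b) (a*b-c^2))) ** cadj (rot x y)"
    using spectral2[OF a ab] by blast
  have pos: "\<forall>i. 0 < diag2 (lamp (a+b) (a*b-c^2)) (lamm (a+b) (a*b-c^2)) i"
    using lam_props[OF a ab] by (auto simp: diag2_def)
  have "mpow (rm a c c b) r = rot x y ** rdiag (\<lambda>i. diag2 (lamp (a+b) (a*b-c^2)) (lamm (a+b) (a*b-c^2)) i powr r) ** cadj (rot x y)"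
    by (rule mpow_eq[OF rot_unitary[OF xy] pos M])
  also have "(\<lambda>i. diag2 (lamp (a+b) (a*b-c^2)) (lamm (a+b) (a*b-c^2)) i powr r) = diag2 (lamp (a+b) (a*b-c^2) powr r) (lamm (a+b) (a*b-c^2) powr r)"
    by (auto simp: diag2_def)
  finally have "mpow (rm a c c b) r = rot x y ** rdiag (diag2 (lamp (a+b) (a*b-c^2) powr r) (lamm (a+b) (a*b-c^2) powr r)) ** cadj (rot x y)" .
  with xy show ?thesis by (intro exI[of _ x] exI[of _ y] conjI)
qed

lemma trace_mpow_rm:
  assumes a: "0 < a" and ab: "c^2 < a*b"
  shows "Re (trace (mpow (rm a c c b) r)) = lamp (a+b) (a*b-c^2) powr r + lamm (a+b) (a*b-c^2) powr r"
proof -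
  obtain x y where xy: "x^2 + y^2 = 1" and M: "mpow (rm a c c b) r =
     rot x y ** rdiag (diag2 (lamp (a+b) (a*b-c^2) powr r) (lamm (a+b) (a*b-c^2) powr r)) ** cadj (rot x y)"
    using mpow_rm_conj[OF a ab] by blast
  have "x^2 * f + y^2 * g + (y^2 * f + x^2 * g) = (x^2+y^2)*(f+g)" for f g :: real by (simp add: algebra_simps)
  thus ?thesis unfolding M conj_rot using xy by simp
qed

lemma mpow_rm_pd:
  assumes a: "0 < a" and ab: "c^2 < a*b"
  shows "\<exists>a' b' c'. mpow (rm a c c b) r = rm a' c' c' b' \<and> 0 < a' \<and> a'*b' - c'^2 = lamp (a+b) (a*b-c^2) powr r * lamm (a+b) (a*b-c^2) powr r"
proof -
  obtain x y where xy: "x^2 + y^2 = 1" and M: "mpow (rm a c c b) r =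
     rot x y ** rdiag (diag2 (lamp (a+b) (a*b-c^2) powr r) (lamm (a+b) (a*b-c^2) powr r)) ** cadj (rot x y)"
    using mpow_rm_conj[OF a ab] by blast
  define f where "f = lamp (a+b) (a*b-c^2) powr r"
  define g where "g = lamm (a+b) (a*b-c^2) powr r"
  have fg: "0 < f" "0 < g" using lam_props[OF a ab] unfolding f_def g_def by auto
  have "0 < x^2 * f + y^2 * g"
  proof (cases "x = 0")
    case True thus ?thesis using xy fg by simp
  next
    case False thus ?thesis using fg by (simp add: add_pos_nonneg)
  qed
  moreover have "(x^2 * f + y^2 * g) * (y^2 * f + x^2 * g) - (x*y*(f-g))^2 = f * g * (x^2+y^2)^2"
    by (simp add: power2_eq_square algebra_simps)
  ultimately show ?thesis unfolding M conj_rot using xy f_def g_def by (intro exI) auto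
qed

lemma mpow_rm_half:
  assumes a: "0 < a" and ab: "c^2 < a*b"
  defines "\<sigma> \<equiv> sqrt (a*b - c^2)"
  defines "\<tau> \<equiv> sqrt (a + b + 2*\<sigma>)"
  shows "mpow (rm a c c b) (1/2) = rm ((a+\<sigma>)/\<tau>) (c/\<tau>) (c/\<tau>) ((b+\<sigma>)/\<tau>)"
proof -
  obtain x y where xy: "x^2 + y^2 = 1" and M: "rm a c c b = rot x y ** rdiag (diag2 (lamp (a+b) (a*b-c^2)) (lamm (a+b) (a*b-c^2))) ** cadj (rot x y)"
    using spectral2[OF a ab] by blast
  define l1 where "l1 = lamp (a+b) (a*b-c^2)"
  define l2 where "l2 = lamm (a+b) (a*b-c^2)"
  have l: "0 < l2" "l1 + l2 = a + b" "l1 * l2 = a*b - c^2" "l2 \<le> l1"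
    using lam_props[OF a ab] unfolding l1_def l2_def by auto
  have pos: "\<forall>i. 0 < diag2 l1 l2 i" using l by (auto simp: diag2_def)
  have Mx: "rm a c c b = rot x y ** rdiag (diag2 l1 l2) ** cadj (rot x y)" using M l1_def l2_def by simp
  have "mpow (rm a c c b) (1/2) = rot x y ** rdiag (\<lambda>i. diag2 l1 l2 i powr (1/2)) ** cadj (rot x y)"
    by (rule mpow_eq[OF rot_unitary[OF xy] pos Mx])
  also have "(\<lambda>i. diag2 l1 l2 i powr (1/2)) = diag2 (sqrt l1) (sqrt l2)"
    using l by (auto simp: diag2_def powr_half_sqrt)
  finally have E: "mpow (rm a c c b) (1/2) = rot x y ** rdiag (diag2 (sqrt l1) (sqrt l2)) ** cadj (rot x y)" .
  have s: "\<sigma> = sqrt l1 * sqrt l2" unfolding \<sigma>_def l(3)[symmetric] by (simp add: real_sqrt_mult)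
  have t: "\<tau> = sqrt l1 + sqrt l2"
  proof -
    have "(sqrt l1 + sqrt l2)^2 = a + b + 2*\<sigma>" using l s by (simp add: power2_eq_square algebra_simps)
    thus ?thesis unfolding \<tau>_def using l by (metis add_nonneg_nonneg real_sqrt_ge_zero real_sqrt_unique order.trans less_imp_le)
  qed
  have tp: "\<tau> > 0" unfolding t using l by (simp add: add_nonneg_pos)
  have k1: "sqrt l1 = (l1 + \<sigma>)/\<tau>" and k2: "sqrt l2 = (l2 + \<sigma>)/\<tau>"
    using tp l unfolding s t by (simp_all add: field_simps power2_eq_square real_sqrt_mult[symmetric])
  have "rot x y ** rdiag (diag2 (sqrt l1) (sqrt l2)) ** cadj (rot x y)
       = (1/\<tau>) *\<^sub>R (rot x y ** rdiag (diag2 l1 l2) ** cadj (rot x y)) + (\<sigma>/\<tau>) *\<^sub>R mat 1"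
  proof -
    have x2: "x^2 = 1 - y^2" using xy by simp
    show ?thesis unfolding conj_rot rm_one k1 k2 using tp
      by (simp add: x2) (simp add: field_simps power2_eq_square)
  qed
  also have "\<dots> = rm ((a+\<sigma>)/\<tau>) (c/\<tau>) (c/\<tau>) ((b+\<sigma>)/\<tau>)"
    unfolding Mx[symmetric] rm_one by (simp add: add_divide_distrib)
  finally show ?thesis using E by simp
qed

definition kA :: "real \<Rightarrow> real \<Rightarrow> real \<Rightarrow> real" where "kA r l1 l2 = (l1 powr r - l2 powr r) / (l1 - l2)"
definition kB :: "real \<Rightarrow> real \<Rightarrow> real \<Rightarrow> real" where "kB r l1 l2 = (l1 * l2 powr r - l2 * l1 powr r) / (l1 - l2)"

lemma kAB: "l1 \<noteq> l2 \<Longrightarrow> kA r l1 l2 * l1 + kB r l1 l2 = l1 powr r"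
  "l1 \<noteq> l2 \<Longrightarrow> kA r l1 l2 * l2 + kB r l1 l2 = l2 powr r"
proof -
  assume ne: "l1 \<noteq> l2"
  have "(l1 powr r - l2 powr r)*l1 + (l1*l2 powr r - l2*l1 powr r) = l1 powr r * (l1 - l2)" by (simp add: algebra_simps)
  thus "kA r l1 l2 * l1 + kB r l1 l2 = l1 powr r" using ne unfolding kA_def kB_def
    by (simp add: divide_simps)
next
  assume ne: "l1 \<noteq> l2"
  have "(l1 powr r - l2 powr r)*l2 + (l1*l2 powr r - l2*l1 powr r) = l2 powr r * (l1 - l2)" by (simp add: algebra_simps)
  thus "kA r l1 l2 * l2 + kB r l1 l2 = l2 powr r" using ne unfolding kA_def kB_def
    by (simp add: divide_simps)
qed

lemma mpow_rm_lagrange: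
  assumes a: "0 < a" and ab: "c^2 < a*b" and ne: "(a-b)^2 + 4*c^2 \<noteq> 0"
  defines "l1 \<equiv> lamp (a+b) (a*b-c^2)" and "l2 \<equiv> lamm (a+b) (a*b-c^2)"
  shows "mpow (rm a c c b) r = rm (kA r l1 l2 * a + kB r l1 l2) (kA r l1 l2 * c) (kA r l1 l2 * c) (kA r l1 l2 * b + kB r l1 l2)"
proof -
  obtain x y where xy: "x^2 + y^2 = 1" and M: "rm a c c b = rot x y ** rdiag (diag2 l1 l2) ** cadj (rot x y)"
    using spectral2[OF a ab] unfolding l1_def l2_def by blast
  have l: "0 < l2" "l2 \<le> l1" "l1 - l2 = sqrt ((a-b)^2 + 4*c^2)"
    using lam_props[OF a ab] unfolding l1_def l2_def by auto
  have ne12: "l1 \<noteq> l2" using l(3) ne by auto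
  have pos: "\<forall>i. 0 < diag2 l1 l2 i" using l by (auto simp: diag2_def)
  have "mpow (rm a c c b) r = rot x y ** rdiag (\<lambda>i. diag2 l1 l2 i powr r) ** cadj (rot x y)"
    by (rule mpow_eq[OF rot_unitary[OF xy] pos M])
  also have "(\<lambda>i. diag2 l1 l2 i powr r) = diag2 (kA r l1 l2 * l1 + kB r l1 l2) (kA r l1 l2 * l2 + kB r l1 l2)"
    using kAB[OF ne12] by (auto simp: diag2_def)
  finally have E: "mpow (rm a c c b) r = rot x y ** rdiag (diag2 (kA r l1 l2 * l1 + kB r l1 l2) (kA r l1 l2 * l2 + kB r l1 l2)) ** cadj (rot x y)" .
  have ME: "a = x^2*l1 + y^2*l2" "c = x*y*(l1-l2)" "b = y^2*l1 + x^2*l2"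
    using M unfolding conj_rot by simp_all
  have x2: "x^2 = 1 - y^2" using xy by simp
  show ?thesis unfolding E conj_rot by (simp add: ME x2 algebra_simps)
qed

lemma conj_mpow:
  assumes xy: "x^2 + y^2 = 1" and f: "0 < f1" "0 < f2"
  shows "mpow (rot x y ** rdiag (diag2 f1 f2) ** cadj (rot x y)) r = rot x y ** rdiag (diag2 (f1 powr r) (f2 powr r)) ** cadj (rot x y)"
proof -
  have pos: "\<forall>i. 0 < diag2 f1 f2 i" using f by (auto simp: diag2_def)
  have "mpow (rot x y ** rdiag (diag2 f1 f2) ** cadj (rot x y)) r = rot x y ** rdiag (\<lambda>i. diag2 f1 f2 i powr r) ** cadj (rot x y)"
    by (rule mpow_eq[OF rot_unitary[OF xy] pos refl])
  also have "(\<lambda>i. diag2 f1 f2 i powr r) = diag2 (f1 powr r) (f2 powr r)" by (auto simp: diag2_def)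
  finally show ?thesis .
qed

definition Bm :: "real \<Rightarrow> real \<Rightarrow> real \<Rightarrow> complex^2^2" where
  "Bm c s E = rm (c^2 + s^2*E) (c * s * (1-E)) (c * s * (1-E)) (s^2 + c^2*E)"

lemma Bm_conj: "Bm c s E = rot c s ** rdiag (diag2 1 E) ** cadj (rot c s)"
  unfolding Bm_def conj_rot by simp

lemma Dm_conj: "rm 1 0 0 E = rot 1 0 ** rdiag (diag2 1 E) ** cadj (rot 1 0)"
  unfolding conj_rot by simp

lemma mpow_Bm: "c^2 + s^2 = 1 \<Longrightarrow> 0 < E \<Longrightarrow> mpow (Bm c s E) r = Bm c s (E powr r)"
  unfolding Bm_conj by (subst conj_mpow) auto

lemma mpow_Dm: "0 < E \<Longrightarrow> mpow (rm 1 0 0 E) r = rm 1 0 0 (E powr r)"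
  unfolding Dm_conj by (subst conj_mpow) (auto simp: Dm_conj[symmetric])

lemma Bm_det: "(c::real)^2 + s^2 = 1 \<Longrightarrow> (c^2 + s^2*E) * (s^2 + c^2*E) - (c * s * (1-E))^2 = E"
proof -
  assume h: "c^2 + s^2 = 1"
  have "(c^2 + s^2*E) * (s^2 + c^2*E) - (c * s * (1-E))^2 = E * (c^2+s^2)^2"
    by (simp add: power2_eq_square algebra_simps)
  thus ?thesis using h by simp
qed

lemma posdef_Bm: "c^2 + s^2 = 1 \<Longrightarrow> 0 < c \<Longrightarrow> 0 < E \<Longrightarrow> posdef (Bm c s E)"
  unfolding Bm_def
proof (rule posdef_rm)
  assume h: "c^2 + s^2 = 1" "0 < c" "0 < E"
  show "0 < c^2 + s^2*E" using h by (simp add: add_pos_nonneg)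
  show "(c * s * (1-E))^2 < (c^2 + s^2*E) * (s^2 + c^2*E)" using Bm_det[OF h(1), of E] h by simp
qed

lemma matrix_inv_eq: "(A::'a::comm_ring_1^'n^'n) ** B = mat 1 \<Longrightarrow> B ** A = mat 1 \<Longrightarrow> matrix_inv A = B"
proof -
  assume h: "A ** B = mat 1" "B ** A = mat 1"
  let ?P = "\<lambda>B'. A ** B' = mat 1 \<and> B' ** A = mat 1"
  have "?P (matrix_inv A)" unfolding matrix_inv_def by (rule someI[of ?P B]) (use h in auto)
  hence "matrix_inv A = matrix_inv A ** (A ** B)" using h by simp
  also have "\<dots> = B" by (simp add: matrix_mul_assoc \<open>?P (matrix_inv A)\<close>)
  finally show ?thesis .
qed

lemma matrix_inv_Dm: "E \<noteq> 0 \<Longrightarrow> matrix_inv (rm 1 0 0 E) = rm 1 0 0 (1/E)"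
  by (rule matrix_inv_eq) (simp_all add: rm_one)

lemma sandwich: "rm a c c b ** rm 1 0 0 E ** rm a c c b = rm (a^2 + E*c^2) (a*c + E*c*b) (a*c + E*c*b) (c^2 + E*b^2)"
  by (simp add: power2_eq_square algebra_simps)

lemma lamp_zero: "0 \<le> T \<Longrightarrow> lamp T 0 = T" unfolding lamp_def by simp
lemma lamm_zero: "0 \<le> T \<Longrightarrow> lamm T 0 = 0" unfolding lamm_def by simp

definition "b11 c s E = c^2 + s^2*E"
definition "b12 c s E = c * s * (1-E)"
definition "b22 c s E = s^2 + c^2*E"
definition "tauf c s E = sqrt (b11 c s E + E * b22 c s E + 2*E)"
definition "G11 c s E = (b11 c s E + E) / tauf c s E"
definition "G12 c s E = b12 c s E / tauf c s E"
definition "G22 c s E = (b22 c s E + 1) / tauf c s E"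

lemma Bm_b: "Bm c s E = rm (b11 c s E) (b12 c s E) (b12 c s E) (b22 c s E)"
  unfolding Bm_def b11_def b12_def b22_def ..

lemma gmean_formula:
  fixes c s E :: real
  assumes cs: "c^2 + s^2 = 1" and c: "0 < c" and E: "0 < E"
  shows "gmean (matrix_inv (rm 1 0 0 E)) (Bm c s E) = rm (G11 c s E) (G12 c s E) (G12 c s E) (G22 c s E)"
proof -
  define h where "h = sqrt E"
  have h: "0 < h" "h*h = E" unfolding h_def using E by auto
  have inv: "matrix_inv (rm 1 0 0 E) = rm 1 0 0 (1/E)" using E by (simp add: matrix_inv_Dm)
  have p1: "mpow (rm 1 0 0 (1/E)) (1/2) = rm 1 0 0 (1/h)"
    using E by (simp add: mpow_Dm h_def powr_half_sqrt real_sqrt_divide)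
  have p2: "mpow (rm 1 0 0 (1/E)) (-1/2) = rm 1 0 0 h"
  proof -
    have "(1/E) powr (-1/2) = E powr (1/2)" using E by (simp add: powr_divide powr_minus_divide)
    thus ?thesis using E by (simp add: mpow_Dm h_def powr_half_sqrt)
  qed
  define a where "a = b11 c s E" define bb where "bb = b22 c s E" define cc where "cc = b12 c s E"
  have det: "a * bb - cc^2 = E" unfolding a_def bb_def cc_def b11_def b12_def b22_def using Bm_det[OF cs] by simp
  have a: "0 < a" unfolding a_def b11_def using c E by (simp add: add_pos_nonneg)
  have Z: "rm 1 0 0 h ** Bm c s E ** rm 1 0 0 h = rm a (h*cc) (h*cc) (E*bb)"
    unfolding Bm_b a_def[symmetric] bb_def[symmetric] cc_def[symmetric] using h by (simp add: algebra_simps)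
  have Zpd: "(h*cc)^2 < a * (E*bb)"
  proof -
    have h2: "h^2 = E" using h by (simp add: power2_eq_square)
    have eq: "(h*cc)^2 = E * cc^2" by (simp add: power_mult_distrib h2)
    have less: "E * cc^2 < E * (a*bb)" using det E by simp
    show ?thesis unfolding eq using less by (simp add: mult.assoc mult.commute mult.left_commute)
  qed
  have sig: "sqrt (a * (E*bb) - (h*cc)^2) = E"
  proof -
    have "a * (E*bb) - (h*cc)^2 = E * (a*bb - cc^2)" using h by (simp add: power2_eq_square algebra_simps)
    thus ?thesis using det E by simp
  qed
  have tau: "sqrt (a + E*bb + 2*E) = tauf c s E" unfolding tauf_def a_def bb_def ..
  have bb: "0 < bb" unfolding bb_def b22_def using c E by (simp add: add_nonneg_pos)
  have tpos: "0 < tauf c s E" unfolding tau[symmetric] using a E bb by (simp add: add_pos_pos)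
  have half: "mpow (rm a (h*cc) (h*cc) (E*bb)) (1/2) = rm ((a+E)/tauf c s E) (h*cc/tauf c s E) (h*cc/tauf c s E) ((E*bb+E)/tauf c s E)"
    using mpow_rm_half[OF a Zpd] unfolding sig tau by simp
  have sw: "rm 1 0 0 (1/h) ** rm P Q Q R ** rm 1 0 0 (1/h) = rm P (Q/h) (Q/h) (R/(h*h))" for P Q R
    by simp
  have e2: "h*cc/tauf c s E/h = G12 c s E" unfolding G12_def cc_def using h by simp
  have e3: "(E*bb+E)/tauf c s E/(h*h) = G22 c s E" unfolding G22_def bb_def h(2) using E tpos
    by (simp add: field_simps)
  show ?thesis
    unfolding gmean_def inv p1 p2 Z half sw e2 e3 by (simp add: G11_def a_def)
qed

definition "gl1 c s E = lamp (G11 c s E + G22 c s E) (G11 c s E * G22 c s E - (G12 c s E)^2)"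
definition "gl2 c s E = lamm (G11 c s E + G22 c s E) (G11 c s E * G22 c s E - (G12 c s E)^2)"
definition "K11 \<alpha> c s E = kA \<alpha> (gl1 c s E) (gl2 c s E) * G11 c s E + kB \<alpha> (gl1 c s E) (gl2 c s E)"
definition "K12 \<alpha> c s E = kA \<alpha> (gl1 c s E) (gl2 c s E) * G12 c s E"
definition "K22 \<alpha> c s E = kA \<alpha> (gl1 c s E) (gl2 c s E) * G22 c s E + kB \<alpha> (gl1 c s E) (gl2 c s E)"
definition "N11 \<alpha> c s E = (K11 \<alpha> c s E)^2 + E * (K12 \<alpha> c s E)^2"
definition "N12 \<alpha> c s E = K11 \<alpha> c s E * K12 \<alpha> c s E + E * K12 \<alpha> c s E * K22 \<alpha> c s E"
definition "N22 \<alpha> c s E = (K12 \<alpha> c s E)^2 + E * (K22 \<alpha> c s E)^2"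
definition "SGtr \<alpha> c s E p = lamp (N11 \<alpha> c s E + N22 \<alpha> c s E) (N11 \<alpha> c s E * N22 \<alpha> c s E - (N12 \<alpha> c s E)^2) powr (1/p)
   + lamm (N11 \<alpha> c s E + N22 \<alpha> c s E) (N11 \<alpha> c s E * N22 \<alpha> c s E - (N12 \<alpha> c s E)^2) powr (1/p)"

definition "M11 \<alpha> c s F = (1-\<alpha>) + \<alpha> * (c^2 + s^2*F)"
definition "M12 \<alpha> c s F = \<alpha> * (c * s * (1-F))"
definition "M22 \<alpha> c s F = (1-\<alpha>) * F + \<alpha> * (s^2 + c^2*F)"
definition "AMtr \<alpha> c s F q = lamp (M11 \<alpha> c s F + M22 \<alpha> c s F) (M11 \<alpha> c s F * M22 \<alpha> c s F - (M12 \<alpha> c s F)^2) powr (1/q)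
   + lamm (M11 \<alpha> c s F + M22 \<alpha> c s F) (M11 \<alpha> c s F * M22 \<alpha> c s F - (M12 \<alpha> c s F)^2) powr (1/q)"

lemma SG_trace:
  fixes c s e p \<alpha> :: real
  assumes cs: "c^2 + s^2 = 1" and c: "0 < c" and e: "0 < e"
    and g1: "0 < G11 c s (e powr p)" and g2: "(G12 c s (e powr p))^2 < G11 c s (e powr p) * G22 c s (e powr p)"
    and g3: "(G11 c s (e powr p) - G22 c s (e powr p))^2 + 4 * (G12 c s (e powr p))^2 \<noteq> 0"
  shows "Re (trace (SG \<alpha> p (rm 1 0 0 e) (Bm c s e))) = SGtr \<alpha> c s (e powr p) p"
proof -
  define E where "E = e powr p"
  have E: "0 < E" unfolding E_def using e by simp
  have K: "mpow (rm (G11 c s E) (G12 c s E) (G12 c s E) (G22 c s E)) \<alpha> = rm (K11 \<alpha> c s E) (K12 \<alpha> c s E) (K12 \<alpha> c s E) (K22 \<alpha> c s E)"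
    unfolding K11_def K12_def K22_def gl1_def gl2_def
    by (rule mpow_rm_lagrange) (use g1 g2 g3 in \<open>simp_all add: E_def\<close>)
  have g1': "0 < G11 c s E" and g2': "(G12 c s E)^2 < G11 c s E * G22 c s E" using g1 g2 unfolding E_def by auto
  obtain a' b' c' where K': "mpow (rm (G11 c s E) (G12 c s E) (G12 c s E) (G22 c s E)) \<alpha> = rm a' c' c' b'"
    and a': "0 < a'" and d0: "a'*b' - c'^2 = lamp (G11 c s E + G22 c s E) (G11 c s E * G22 c s E - (G12 c s E)^2) powr \<alpha> *
       lamm (G11 c s E + G22 c s E) (G11 c s E * G22 c s E - (G12 c s E)^2) powr \<alpha>"
    using mpow_rm_pd[OF g1' g2', of \<alpha>] by blast
  have lp: "0 < lamm (G11 c s E + G22 c s E) (G11 c s E * G22 c s E - (G12 c s E)^2)"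
     "lamm (G11 c s E + G22 c s E) (G11 c s E * G22 c s E - (G12 c s E)^2) \<le> lamp (G11 c s E + G22 c s E) (G11 c s E * G22 c s E - (G12 c s E)^2)"
    using lam_props[OF g1' g2'] by auto
  have d': "0 < a'*b' - c'^2" unfolding d0 using lp by (intro mult_pos_pos) auto
  have Ke: "K11 \<alpha> c s E = a'" "K12 \<alpha> c s E = c'" "K22 \<alpha> c s E = b'" using K K' by simp_all
  have F: "Falpha \<alpha> (mpow (rm 1 0 0 e) p) (mpow (Bm c s e) p) = rm (N11 \<alpha> c s E) (N12 \<alpha> c s E) (N12 \<alpha> c s E) (N22 \<alpha> c s E)"
    unfolding Falpha_def mpow_Dm[OF e] mpow_Bm[OF cs e] E_def[symmetric] gmean_formula[OF cs c E] K sandwich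
      N11_def N12_def N22_def ..
  have n1: "0 < N11 \<alpha> c s E" unfolding N11_def Ke using a' E by (simp add: add_pos_nonneg)
  have n2: "(N12 \<alpha> c s E)^2 < N11 \<alpha> c s E * N22 \<alpha> c s E"
  proof -
    have "N11 \<alpha> c s E * N22 \<alpha> c s E - (N12 \<alpha> c s E)^2 = E * (a'*b' - c'^2)^2"
      unfolding N11_def N12_def N22_def Ke by (simp add: power2_eq_square algebra_simps)
    moreover have "0 < E * (a'*b' - c'^2)^2" using E d' by simp
    ultimately show ?thesis by simp
  qed
  show ?thesis unfolding SG_def F trace_mpow_rm[OF n1 n2] unfolding SGtr_def E_def ..
qed

lemma AM_trace:
  fixes c s e q \<alpha> :: real
  assumes cs: "c^2 + s^2 = 1" and e: "0 < e"
    and m1: "0 < M11 \<alpha> c s (e powr q)" and m2: "(M12 \<alpha> c s (e powr q))^2 < M11 \<alpha> c s (e powr q) * M22 \<alpha> c s (e powr q)"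
  shows "Re (trace (AM \<alpha> q (rm 1 0 0 e) (Bm c s e))) = AMtr \<alpha> c s (e powr q) q"
proof -
  have S: "(1 - \<alpha>) *\<^sub>R mpow (rm 1 0 0 e) q + \<alpha> *\<^sub>R mpow (Bm c s e) q =
     rm (M11 \<alpha> c s (e powr q)) (M12 \<alpha> c s (e powr q)) (M12 \<alpha> c s (e powr q)) (M22 \<alpha> c s (e powr q))"
    unfolding mpow_Dm[OF e] mpow_Bm[OF cs e] unfolding Bm_def M11_def M12_def M22_def by simp
  show ?thesis unfolding AM_def S trace_mpow_rm[OF m1 m2] AMtr_def ..
qed

definition "gT c s = c + (s^2+1)/c"
definition "gD c s = c * ((s^2+1)/c) - s^2"
definition "L1 c s = lamp (gT c s) (gD c s)"
definition "L2 c s = lamm (gT c s) (gD c s)"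
definition "kAL c s \<alpha> = kA \<alpha> (L1 c s) (L2 c s)"
definition "kBL c s \<alpha> = kB \<alpha> (L1 c s) (L2 c s)"
definition "TT c s \<alpha> = (kAL c s \<alpha> * c + kBL c s \<alpha>)^2 + (kAL c s \<alpha> * s)^2"

context
  fixes c s :: real and F :: "'a filter" and Ef :: "'a \<Rightarrow> real"
  assumes cs: "c^2 + s^2 = 1" and c: "0 < c" and s: "0 < s"
    and Ef: "(Ef \<longlongrightarrow> 0) F" and Efp: "eventually (\<lambda>x. 0 < Ef x) F"
begin


lemma GL_props: "s^2 < c * ((s^2+1)/c)" "(c - (s^2+1)/c)^2 + 4* s^2 \<noteq> 0" "0 < L2 c s" "L2 c s < L1 c s"
proof -
  show g2: "s^2 < c * ((s^2+1)/c)" using c by simp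
  have "0 < (c - (s^2+1)/c)^2 + 4* s^2" using s by (simp add: add_nonneg_pos)
  thus "(c - (s^2+1)/c)^2 + 4* s^2 \<noteq> 0" by simp
  have l: "0 < lamm (c + (s^2+1)/c) (c * ((s^2+1)/c) - s^2)"
    "lamp (c + (s^2+1)/c) (c * ((s^2+1)/c) - s^2) - lamm (c + (s^2+1)/c) (c * ((s^2+1)/c) - s^2) = sqrt ((c - (s^2+1)/c)^2 + 4* s^2)"
    using lam_props[OF c g2] by auto
  show "0 < L2 c s" using l(1) unfolding L2_def gT_def gD_def .
  have "0 < sqrt ((c - (s^2+1)/c)^2 + 4* s^2)" using \<open>0 < (c - (s^2+1)/c)^2 + 4* s^2\<close> by simp
  thus "L2 c s < L1 c s" using l(2) unfolding L1_def L2_def gT_def gD_def by linarith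
qed


lemma lim_G:
  shows "((\<lambda>x. G11 c s (Ef x)) \<longlongrightarrow> c) F" "((\<lambda>x. G12 c s (Ef x)) \<longlongrightarrow> s) F"
    "((\<lambda>x. G22 c s (Ef x)) \<longlongrightarrow> (s^2+1)/c) F"
proof -
  have t: "((\<lambda>x. tauf c s (Ef x)) \<longlongrightarrow> c) F"
  proof -
    have "((\<lambda>x. tauf c s (Ef x)) \<longlongrightarrow> sqrt (c^2 + s^2*0 + 0 * (s^2 + c^2*0) + 2*0)) F"
      unfolding tauf_def b11_def b22_def by (intro tendsto_intros Ef)
    thus ?thesis using c by simp
  qed
  have "((\<lambda>x. G11 c s (Ef x)) \<longlongrightarrow> (c^2 + s^2*0 + 0)/c) F"
    unfolding G11_def b11_def using c by (intro tendsto_intros Ef t) auto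
  thus "((\<lambda>x. G11 c s (Ef x)) \<longlongrightarrow> c) F" using c by (simp add: power2_eq_square)
  have "((\<lambda>x. G12 c s (Ef x)) \<longlongrightarrow> (c * s * (1-0))/c) F"
    unfolding G12_def b12_def using c by (intro tendsto_intros Ef t) auto
  thus "((\<lambda>x. G12 c s (Ef x)) \<longlongrightarrow> s) F" using c by simp
  have "((\<lambda>x. G22 c s (Ef x)) \<longlongrightarrow> (s^2 + c^2*0 + 1)/c) F"
    unfolding G22_def b22_def using c by (intro tendsto_intros Ef t) auto
  thus "((\<lambda>x. G22 c s (Ef x)) \<longlongrightarrow> (s^2+1)/c) F" by simp
qed

lemma lim_gl: "((\<lambda>x. gl1 c s (Ef x)) \<longlongrightarrow> L1 c s) F" "((\<lambda>x. gl2 c s (Ef x)) \<longlongrightarrow> L2 c s) F"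
  unfolding gl1_def gl2_def L1_def L2_def gT_def gD_def lamp_def lamm_def
  by (intro tendsto_intros lim_G; simp)+


lemma lim_K:
  "((\<lambda>x. K11 \<alpha> c s (Ef x)) \<longlongrightarrow> kAL c s \<alpha> * c + kBL c s \<alpha>) F"
  "((\<lambda>x. K12 \<alpha> c s (Ef x)) \<longlongrightarrow> kAL c s \<alpha> * s) F"
  "((\<lambda>x. K22 \<alpha> c s (Ef x)) \<longlongrightarrow> kAL c s \<alpha> * ((s^2+1)/c) + kBL c s \<alpha>) F"
proof -
  have ne: "L1 c s \<noteq> 0" "L2 c s \<noteq> 0" "L1 c s - L2 c s \<noteq> 0" using GL_props by auto
  have a: "((\<lambda>x. kA \<alpha> (gl1 c s (Ef x)) (gl2 c s (Ef x))) \<longlongrightarrow> kAL c s \<alpha>) F"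
    unfolding kA_def kAL_def by (intro tendsto_intros lim_gl; use ne in simp)
  have b: "((\<lambda>x. kB \<alpha> (gl1 c s (Ef x)) (gl2 c s (Ef x))) \<longlongrightarrow> kBL c s \<alpha>) F"
    unfolding kB_def kBL_def by (intro tendsto_intros lim_gl; use ne in simp)
  show "((\<lambda>x. K11 \<alpha> c s (Ef x)) \<longlongrightarrow> kAL c s \<alpha> * c + kBL c s \<alpha>) F"
    unfolding K11_def by (intro tendsto_intros a b lim_G)
  show "((\<lambda>x. K12 \<alpha> c s (Ef x)) \<longlongrightarrow> kAL c s \<alpha> * s) F"
    unfolding K12_def by (intro tendsto_intros a b lim_G)
  show "((\<lambda>x. K22 \<alpha> c s (Ef x)) \<longlongrightarrow> kAL c s \<alpha> * ((s^2+1)/c) + kBL c s \<alpha>) F"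
    unfolding K22_def by (intro tendsto_intros a b lim_G)
qed


lemma lam_nonneg:
  fixes a b d :: real
  assumes "0 \<le> a + b" "0 \<le> a*b - d^2"
  shows "0 \<le> lamm (a+b) (a*b-d^2)" "0 \<le> lamp (a+b) (a*b-d^2)"
proof -
  have disc: "(a+b)^2 - 4*(a*b-d^2) = (a-b)^2 + 4*d^2" by (simp add: power2_eq_square algebra_simps)
  have "(a+b)^2 - 4*(a*b-d^2) \<le> (a+b)^2" using assms by simp
  hence "sqrt ((a+b)^2 - 4*(a*b-d^2)) \<le> sqrt ((a+b)^2)" by (rule real_sqrt_le_mono)
  also have "\<dots> = a + b" using assms by simp
  finally show "0 \<le> lamm (a+b) (a*b-d^2)" unfolding lamm_def by simp
  have "0 \<le> sqrt ((a+b)^2 - 4*(a*b-d^2))" unfolding disc by simp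
  thus "0 \<le> lamp (a+b) (a*b-d^2)" unfolding lamp_def using assms by simp
qed


lemma lim_SG:
  assumes p: "0 < p"
  shows "((\<lambda>x. SGtr \<alpha> c s (Ef x) p) \<longlongrightarrow> TT c s \<alpha> powr (1/p)) F"
proof -
  let ?a = "kAL c s \<alpha> * c + kBL c s \<alpha>" and ?b = "kAL c s \<alpha> * s" and ?d = "kAL c s \<alpha> * ((s^2+1)/c) + kBL c s \<alpha>"
  have n11: "((\<lambda>x. N11 \<alpha> c s (Ef x)) \<longlongrightarrow> ?a^2 + 0 * ?b^2) F"
    unfolding N11_def by (intro tendsto_intros lim_K Ef)
  have n12: "((\<lambda>x. N12 \<alpha> c s (Ef x)) \<longlongrightarrow> ?a * ?b + 0 * ?b * ?d) F"
    unfolding N12_def by (intro tendsto_intros lim_K Ef)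
  have n22: "((\<lambda>x. N22 \<alpha> c s (Ef x)) \<longlongrightarrow> ?b^2 + 0 * ?d^2) F"
    unfolding N22_def by (intro tendsto_intros lim_K Ef)
  have T: "((\<lambda>x. N11 \<alpha> c s (Ef x) + N22 \<alpha> c s (Ef x)) \<longlongrightarrow> TT c s \<alpha>) F"
    using tendsto_add[OF n11 n22] unfolding TT_def by simp
  have D: "((\<lambda>x. N11 \<alpha> c s (Ef x) * N22 \<alpha> c s (Ef x) - (N12 \<alpha> c s (Ef x))^2) \<longlongrightarrow> 0) F"
    using tendsto_diff[OF tendsto_mult[OF n11 n22] tendsto_power[OF n12, of 2]]
    by (simp add: power2_eq_square algebra_simps)
  have TT0: "0 \<le> TT c s \<alpha>" unfolding TT_def by simp
  have lp: "((\<lambda>x. lamp (N11 \<alpha> c s (Ef x) + N22 \<alpha> c s (Ef x)) (N11 \<alpha> c s (Ef x) * N22 \<alpha> c s (Ef x) - (N12 \<alpha> c s (Ef x))^2)) \<longlongrightarrow> lamp (TT c s \<alpha>) 0) F"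
    unfolding lamp_def by (intro tendsto_intros T D; simp)
  have lm: "((\<lambda>x. lamm (N11 \<alpha> c s (Ef x) + N22 \<alpha> c s (Ef x)) (N11 \<alpha> c s (Ef x) * N22 \<alpha> c s (Ef x) - (N12 \<alpha> c s (Ef x))^2)) \<longlongrightarrow> lamm (TT c s \<alpha>) 0) F"
    unfolding lamm_def by (intro tendsto_intros T D; simp)
  have nn: "eventually (\<lambda>x. 0 \<le> lamm (N11 \<alpha> c s (Ef x) + N22 \<alpha> c s (Ef x)) (N11 \<alpha> c s (Ef x) * N22 \<alpha> c s (Ef x) - (N12 \<alpha> c s (Ef x))^2)
       \<and> 0 \<le> lamp (N11 \<alpha> c s (Ef x) + N22 \<alpha> c s (Ef x)) (N11 \<alpha> c s (Ef x) * N22 \<alpha> c s (Ef x) - (N12 \<alpha> c s (Ef x))^2)) F"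
    using Efp
  proof (rule eventually_mono)
    fix x assume E: "0 < Ef x"
    have a: "0 \<le> N11 \<alpha> c s (Ef x) + N22 \<alpha> c s (Ef x)" unfolding N11_def N22_def using E by simp
    have "N11 \<alpha> c s (Ef x) * N22 \<alpha> c s (Ef x) - (N12 \<alpha> c s (Ef x))^2 = Ef x * (K11 \<alpha> c s (Ef x) * K22 \<alpha> c s (Ef x) - (K12 \<alpha> c s (Ef x))^2)^2"
      unfolding N11_def N12_def N22_def by (simp add: power2_eq_square algebra_simps)
    hence b: "0 \<le> N11 \<alpha> c s (Ef x) * N22 \<alpha> c s (Ef x) - (N12 \<alpha> c s (Ef x))^2" using E by simp
    show "0 \<le> lamm (N11 \<alpha> c s (Ef x) + N22 \<alpha> c s (Ef x)) (N11 \<alpha> c s (Ef x) * N22 \<alpha> c s (Ef x) - (N12 \<alpha> c s (Ef x))^2)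
       \<and> 0 \<le> lamp (N11 \<alpha> c s (Ef x) + N22 \<alpha> c s (Ef x)) (N11 \<alpha> c s (Ef x) * N22 \<alpha> c s (Ef x) - (N12 \<alpha> c s (Ef x))^2)"
      using lam_nonneg[OF a b] by simp
  qed
  have "((\<lambda>x. SGtr \<alpha> c s (Ef x) p) \<longlongrightarrow> lamp (TT c s \<alpha>) 0 powr (1/p) + lamm (TT c s \<alpha>) 0 powr (1/p)) F"
    unfolding SGtr_def
    by (intro tendsto_add tendsto_powr'[OF lp] tendsto_powr'[OF lm] tendsto_const disjI2 conjI)
       (use p nn in \<open>auto elim: eventually_mono\<close>)
  thus ?thesis using TT0 p by (simp add: lamp_zero lamm_zero)
qed

lemma lim_AM:
  assumes q: "0 < q" and \<alpha>: "0 < \<alpha>" "\<alpha> < 1"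
  shows "((\<lambda>x. AMtr \<alpha> c s (Ef x) q) \<longlongrightarrow> lamp 1 (\<alpha>*(1-\<alpha>)* s^2) powr (1/q) + lamm 1 (\<alpha>*(1-\<alpha>)* s^2) powr (1/q)) F"
proof -
  have m11: "((\<lambda>x. M11 \<alpha> c s (Ef x)) \<longlongrightarrow> (1-\<alpha>) + \<alpha> * (c^2 + s^2*0)) F" unfolding M11_def by (intro tendsto_intros Ef)
  have m12: "((\<lambda>x. M12 \<alpha> c s (Ef x)) \<longlongrightarrow> \<alpha> * (c * s * (1-0))) F" unfolding M12_def by (intro tendsto_intros Ef)
  have m22: "((\<lambda>x. M22 \<alpha> c s (Ef x)) \<longlongrightarrow> (1-\<alpha>) * 0 + \<alpha> * (s^2 + c^2*0)) F" unfolding M22_def by (intro tendsto_intros Ef)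
  have T: "((\<lambda>x. M11 \<alpha> c s (Ef x) + M22 \<alpha> c s (Ef x)) \<longlongrightarrow> 1) F"
  proof -
    have h: "\<alpha>*c^2 + \<alpha>* s^2 = \<alpha>" by (metis cs distrib_left mult.right_neutral)
    have v: "(1-\<alpha>) + \<alpha> * (c^2 + s^2*0) + ((1-\<alpha>) * 0 + \<alpha> * (s^2 + c^2*0)) = 1"
      using h by (simp add: algebra_simps)
    show ?thesis using tendsto_add[OF m11 m22, unfolded v] .
  qed
  have D: "((\<lambda>x. M11 \<alpha> c s (Ef x) * M22 \<alpha> c s (Ef x) - (M12 \<alpha> c s (Ef x))^2) \<longlongrightarrow> \<alpha>*(1-\<alpha>)* s^2) F"
  proof -
    have "((1-\<alpha>) + \<alpha> * (c^2 + s^2*0)) * ((1-\<alpha>) * 0 + \<alpha> * (s^2 + c^2*0)) - (\<alpha> * (c * s * (1-0)))^2 = \<alpha>*(1-\<alpha>)* s^2"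
      by (simp add: power2_eq_square algebra_simps)
    thus ?thesis using tendsto_diff[OF tendsto_mult[OF m11 m22] tendsto_power[OF m12, of 2]] by simp
  qed
  have X: "0 < \<alpha>*(1-\<alpha>)* s^2" using \<alpha> s by simp
  have l2: "0 < lamm 1 (\<alpha>*(1-\<alpha>)* s^2)" by (rule lamm_pos) (use X in auto)
  have l1: "0 < lamp 1 (\<alpha>*(1-\<alpha>)* s^2)"
  proof -
    have k: "\<alpha>*(1-\<alpha>) \<le> 1/4"
    proof -
      have "0 \<le> (2*\<alpha>-1)^2" by simp
      thus ?thesis by (simp add: power2_eq_square algebra_simps)
    qed
    have s1: "s^2 \<le> 1" using cs zero_le_power2[of c] by linarith
    have "\<alpha>*(1-\<alpha>)* s^2 \<le> 1/4 * 1" using k s1 \<alpha> by (intro mult_mono) auto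
    hence "4*(\<alpha>*(1-\<alpha>)* s^2) \<le> 1^2" by simp
    hence "lamm 1 (\<alpha>*(1-\<alpha>)* s^2) \<le> lamp 1 (\<alpha>*(1-\<alpha>)* s^2)" by (rule lam_le)
    thus ?thesis using l2 by simp
  qed
  have lp: "((\<lambda>x. lamp (M11 \<alpha> c s (Ef x) + M22 \<alpha> c s (Ef x)) (M11 \<alpha> c s (Ef x) * M22 \<alpha> c s (Ef x) - (M12 \<alpha> c s (Ef x))^2)) \<longlongrightarrow> lamp 1 (\<alpha>*(1-\<alpha>)* s^2)) F"
    unfolding lamp_def by (intro tendsto_intros T D; simp)
  have lm: "((\<lambda>x. lamm (M11 \<alpha> c s (Ef x) + M22 \<alpha> c s (Ef x)) (M11 \<alpha> c s (Ef x) * M22 \<alpha> c s (Ef x) - (M12 \<alpha> c s (Ef x))^2)) \<longlongrightarrow> lamm 1 (\<alpha>*(1-\<alpha>)* s^2)) F"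
    unfolding lamm_def by (intro tendsto_intros T D; simp)
  show ?thesis unfolding AMtr_def
    by (intro tendsto_add tendsto_powr[OF lp] tendsto_powr[OF lm] tendsto_const) (use l1 l2 in auto)
qed


lemma ev_G: "eventually (\<lambda>x. 0 < G11 c s (Ef x) \<and> (G12 c s (Ef x))^2 < G11 c s (Ef x) * G22 c s (Ef x)
   \<and> (G11 c s (Ef x) - G22 c s (Ef x))^2 + 4 * (G12 c s (Ef x))^2 \<noteq> 0) F"
proof -
  have e1: "eventually (\<lambda>x. 0 < G11 c s (Ef x)) F" using order_tendstoD(1)[OF lim_G(1) c] .
  have "((\<lambda>x. G11 c s (Ef x) * G22 c s (Ef x) - (G12 c s (Ef x))^2) \<longlongrightarrow> c * ((s^2+1)/c) - s^2) F"
    by (intro tendsto_intros lim_G)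
  moreover have "c * ((s^2+1)/c) - s^2 > 0" using c by simp
  ultimately have e2: "eventually (\<lambda>x. 0 < G11 c s (Ef x) * G22 c s (Ef x) - (G12 c s (Ef x))^2) F"
    by (rule order_tendstoD(1))
  have "((\<lambda>x. (G11 c s (Ef x) - G22 c s (Ef x))^2 + 4 * (G12 c s (Ef x))^2) \<longlongrightarrow> (c - (s^2+1)/c)^2 + 4 * s^2) F"
    by (intro tendsto_intros lim_G)
  moreover have "(c - (s^2+1)/c)^2 + 4 * s^2 > 0" using s by (simp add: add_nonneg_pos)
  ultimately have e3: "eventually (\<lambda>x. 0 < (G11 c s (Ef x) - G22 c s (Ef x))^2 + 4 * (G12 c s (Ef x))^2) F"
    by (rule order_tendstoD(1))
  show ?thesis using e1 e2 e3 by eventually_elim auto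
qed

lemma ev_M:
  assumes \<alpha>: "0 < \<alpha>" "\<alpha> < 1"
  shows "eventually (\<lambda>x. 0 < M11 \<alpha> c s (Ef x) \<and> (M12 \<alpha> c s (Ef x))^2 < M11 \<alpha> c s (Ef x) * M22 \<alpha> c s (Ef x)) F"
proof -
  have m11: "((\<lambda>x. M11 \<alpha> c s (Ef x)) \<longlongrightarrow> (1-\<alpha>) + \<alpha> * (c^2 + s^2*0)) F" unfolding M11_def by (intro tendsto_intros Ef)
  have m12: "((\<lambda>x. M12 \<alpha> c s (Ef x)) \<longlongrightarrow> \<alpha> * (c * s * (1-0))) F" unfolding M12_def by (intro tendsto_intros Ef)
  have m22: "((\<lambda>x. M22 \<alpha> c s (Ef x)) \<longlongrightarrow> (1-\<alpha>) * 0 + \<alpha> * (s^2 + c^2*0)) F" unfolding M22_def by (intro tendsto_intros Ef)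
  have "(1-\<alpha>) + \<alpha> * (c^2 + s^2*0) > 0" using \<alpha> by (simp add: add_pos_nonneg)
  hence e1: "eventually (\<lambda>x. 0 < M11 \<alpha> c s (Ef x)) F" using order_tendstoD(1)[OF m11] by blast
  have v: "((1-\<alpha>) + \<alpha> * (c^2 + s^2*0)) * ((1-\<alpha>) * 0 + \<alpha> * (s^2 + c^2*0)) - (\<alpha> * (c * s * (1-0)))^2 = \<alpha>*(1-\<alpha>)* s^2"
    by (simp add: power2_eq_square algebra_simps)
  have "((\<lambda>x. M11 \<alpha> c s (Ef x) * M22 \<alpha> c s (Ef x) - (M12 \<alpha> c s (Ef x))^2) \<longlongrightarrow> \<alpha>*(1-\<alpha>)* s^2) F"
    using tendsto_diff[OF tendsto_mult[OF m11 m22] tendsto_power[OF m12, of 2]] unfolding v .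
  moreover have "0 < \<alpha>*(1-\<alpha>)* s^2" using \<alpha> s by simp
  ultimately have e2: "eventually (\<lambda>x. 0 < M11 \<alpha> c s (Ef x) * M22 \<alpha> c s (Ef x) - (M12 \<alpha> c s (Ef x))^2) F"
    by (rule order_tendstoD(1))
  show ?thesis using e1 e2 by eventually_elim auto
qed

end

lemma cosh_quad: "1 + z^2/2 \<le> cosh (z::real)"
proof -
  let ?f = "\<lambda>n. if even n then z ^ n /\<^sub>R fact n else 0"
  have s: "?f sums cosh z" by (rule cosh_converges)
  have "sum ?f {..<3} \<le> suminf ?f"
    by (rule sum_le_suminf) (use s in \<open>auto simp: sums_iff zero_le_even_power\<close>)
  moreover have "sum ?f {..<3} = 1 + z^2/2" by (simp add: numeral_3_eq_3 eval_nat_numeral)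
  ultimately show ?thesis using s by (simp add: sums_iff)
qed

lemma exp_pm: "exp z + exp (-z) \<ge> 2 + (z::real)^2"
  using cosh_quad[of z] by (simp add: cosh_field_def)

lemma ln_u_bound:
  fixes t :: real assumes "0 < t" "t \<le> 1/2"
  shows "2*t - t^2 \<le> ln ((1+t)/(1-t))"
proof -
  have "t - t^2 \<le> ln (1+t)" using assms by (intro ln_one_plus_pos_lower_bound) auto
  moreover have "ln (1-t) \<le> -t" using assms by (intro ln_one_minus_pos_upper_bound) auto
  moreover have "ln ((1+t)/(1-t)) = ln (1+t) - ln (1-t)" using assms by (simp add: ln_div)
  ultimately show ?thesis by linarith
qed

definition T0f :: "real \<Rightarrow> real \<Rightarrow> real" where
  "T0f \<alpha> t = (1-t)^2/(2*(1+t^2)) * (((1+t)/(1-t)) powr \<alpha>)^2 + (1+t)^2/(2*(1+t^2)) * ((1/((1+t)/(1-t))) powr \<alpha>)^2"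

definition Lbf :: "real \<Rightarrow> real \<Rightarrow> real" where
  "Lbf \<alpha> t = (1-t^2)/(1+t^2) * (1 + (2*\<alpha>-1)^2 * (2*t - t^2)^2 / 2)"

lemma T0_ge_Lb:
  fixes t :: real assumes t: "0 < t" "t \<le> 1/2"
  shows "Lbf \<alpha> t \<le> T0f \<alpha> t"
proof -
  define u where "u = (1+t)/(1-t)"
  define \<gamma> where "\<gamma> = 2*\<alpha> - 1"
  define ll where "ll = ln u"
  have u: "0 < u" unfolding u_def using t by simp
  have e1: "(u powr \<alpha>)^2 = u * u powr \<gamma>"
    using u by (simp add: \<gamma>_def power2_eq_square powr_add[symmetric] powr_diff)
  have e2: "((1/u) powr \<alpha>)^2 = (1/u) * u powr (-\<gamma>)"
    using u by (simp add: \<gamma>_def power2_eq_square powr_add[symmetric] powr_diff powr_minus_divide powr_divide)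
  have a1: "(1-t)^2 * u = 1 - t^2" unfolding u_def using t by (simp add: power2_eq_square field_simps)
  have a2: "(1+t)^2 * (1/u) = 1 - t^2" unfolding u_def using t by (simp add: power2_eq_square field_simps)
  have T: "T0f \<alpha> t = (1-t^2)/(2*(1+t^2)) * (u powr \<gamma> + u powr (-\<gamma>))"
  proof -
    have "T0f \<alpha> t = ((1-t)^2 * u) * u powr \<gamma> / (2*(1+t^2)) + ((1+t)^2 * (1/u)) * u powr (-\<gamma>) / (2*(1+t^2))"
      unfolding T0f_def u_def[symmetric] e1 e2 by (simp add: mult.commute mult.left_commute)
    also have "\<dots> = (1-t^2)/(2*(1+t^2)) * (u powr \<gamma> + u powr (-\<gamma>))"
      unfolding a1 a2 by (simp add: add_divide_distrib[symmetric] ring_distribs mult.commute)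
    finally show ?thesis .
  qed
  have "u powr \<gamma> + u powr (-\<gamma>) = exp (\<gamma>*ll) + exp (-(\<gamma>*ll))"
    using u by (simp add: powr_def ll_def mult.commute)
  also have "\<dots> \<ge> 2 + (\<gamma>*ll)^2" by (rule exp_pm)
  finally have c: "2 + \<gamma>^2 * ll^2 \<le> u powr \<gamma> + u powr (-\<gamma>)" by (simp add: power_mult_distrib)
  have l: "2*t - t^2 \<le> ll" unfolding ll_def u_def by (rule ln_u_bound[OF t])
  have l0: "0 \<le> 2*t - t^2" using t by (simp add: power2_eq_square)
  have "(2*t - t^2)^2 \<le> ll^2" using l l0 by (intro power_mono) auto
  hence "\<gamma>^2 * (2*t - t^2)^2 \<le> \<gamma>^2 * ll^2" by (intro mult_left_mono) auto
  with c have "2 + \<gamma>^2 * (2*t - t^2)^2 \<le> u powr \<gamma> + u powr (-\<gamma>)" by linarith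
  moreover have "0 \<le> (1-t^2)/(2*(1+t^2))"
  proof -
    have "t^2 \<le> 1" using t by (intro power_le_one) auto
    thus ?thesis by (intro divide_nonneg_pos) (auto simp: add_pos_nonneg)
  qed
  ultimately have "(1-t^2)/(2*(1+t^2)) * (2 + \<gamma>^2 * (2*t - t^2)^2) \<le> T0f \<alpha> t"
    unfolding T by (rule mult_left_mono)
  moreover have "(1-t^2)/(2*(1+t^2)) * (2 + \<gamma>^2 * (2*t - t^2)^2) = Lbf \<alpha> t"
    unfolding Lbf_def \<gamma>_def by (simp add: field_simps)
  ultimately show ?thesis by simp
qed

lemma lower_bound:
  fixes t p \<alpha> :: real assumes t: "0 < t" "t \<le> 1/2" and p: "0 < p"
  shows "0 < Lbf \<alpha> t" "1 + (1 - 1/Lbf \<alpha> t)/p \<le> T0f \<alpha> t powr (1/p)"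
proof -
  have "t^2 \<le> (1/2)^2" using t by (intro power_mono) auto
  hence t2: "t^2 < 1" by (simp add: power2_eq_square)
  show Lp: "0 < Lbf \<alpha> t" unfolding Lbf_def using t2
    by (intro mult_pos_pos divide_pos_pos) (auto simp: add_pos_nonneg)
  have T: "Lbf \<alpha> t \<le> T0f \<alpha> t" by (rule T0_ge_Lb[OF t])
  hence Tp: "0 < T0f \<alpha> t" using Lp by linarith
  have "ln (1 / Lbf \<alpha> t) \<le> 1 / Lbf \<alpha> t - 1" using Lp by (intro ln_le_minus_one) simp
  hence l1: "1 - 1/Lbf \<alpha> t \<le> ln (Lbf \<alpha> t)" using Lp by (simp add: ln_div)
  have "ln (Lbf \<alpha> t) \<le> ln (T0f \<alpha> t)" using T Lp by simp
  with l1 have A: "(1 - 1/Lbf \<alpha> t)/p \<le> ln (T0f \<alpha> t) / p" using p by (simp add: divide_right_mono)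
  have "1 + ln (T0f \<alpha> t) / p \<le> exp (ln (T0f \<alpha> t) / p)" by (rule exp_ge_add_one_self)
  also have "exp (ln (T0f \<alpha> t) / p) = T0f \<alpha> t powr (1/p)" using Tp by (simp add: powr_def)
  finally have "ln (T0f \<alpha> t) / p \<le> T0f \<alpha> t powr (1/p) - 1" by simp
  with A show "1 + (1 - 1/Lbf \<alpha> t)/p \<le> T0f \<alpha> t powr (1/p)" by simp
qed

lemma upper_bound:
  fixes X r :: real assumes X: "0 < X" "X \<le> 1/4" and r: "1 \<le> r"
  shows "lamp 1 X powr r + lamm 1 X powr r \<le> 1/(1 + r*X) + (2*X) powr r"
proof -
  define z where "z = lamm 1 X"
  have zd: "z = (1 - sqrt (1 - 4*X))/2" unfolding z_def lamm_def by simp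
  have lp: "lamp 1 X = 1 - z" unfolding z_def using lam_sum[of 1 X] by simp
  have s1: "sqrt (1 - 4*X) \<le> 1 - 2*X"
  proof -
    have "sqrt (1 - 4*X) \<le> sqrt ((1 - 2*X)^2)" using X by (simp add: power2_eq_square algebra_simps)
    also have "\<dots> = 1 - 2*X" using X by simp
    finally show ?thesis .
  qed
  have s2: "1 - 4*X \<le> sqrt (1 - 4*X)"
  proof -
    have y: "0 \<le> 1 - 4*X" "1 - 4*X \<le> 1" using X by auto
    have "sqrt (1 - 4*X) \<le> 1" using y by simp
    hence "sqrt (1 - 4*X) * sqrt (1 - 4*X) \<le> sqrt (1 - 4*X)" using y by (intro mult_left_le_one_le) auto
    moreover have "sqrt (1 - 4*X) * sqrt (1 - 4*X) = 1 - 4*X" using y by (simp only: real_sqrt_mult_self abs_of_nonneg)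
    ultimately show ?thesis by simp
  qed
  have zX: "X \<le> z" "z \<le> 2*X" using s1 s2 unfolding zd by auto
  have z1: "z < 1" using zX X by simp
  have "(1 - z) powr r = exp (r * ln (1 - z))" using z1 by (simp add: powr_def)
  also have "\<dots> \<le> exp (- (r * z))"
  proof -
    have "ln (1 - z) \<le> - z" using zX X z1 by (intro ln_one_minus_pos_upper_bound) auto
    hence "r * ln (1 - z) \<le> r * (-z)" using r by (intro mult_left_mono) auto
    thus ?thesis by simp
  qed
  also have "\<dots> = 1 / exp (r*z)" by (simp add: exp_minus field_simps)
  also have "\<dots> \<le> 1 / (1 + r*z)" using zX X r
    by (intro divide_left_mono) (auto simp: add_pos_nonneg)
  also have "\<dots> \<le> 1 / (1 + r*X)" using zX X r
    by (intro divide_left_mono) (auto simp: add_pos_nonneg mult_left_mono)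
  finally have a: "lamp 1 X powr r \<le> 1 / (1 + r*X)" unfolding lp .
  have b: "lamm 1 X powr r \<le> (2*X) powr r" unfolding z_def[symmetric] using zX X r by (intro powr_mono2) auto
  show ?thesis using a b by simp
qed

lemma analysis_contra:
  fixes \<alpha> p q :: real
  assumes \<alpha>: "0 < \<alpha>" "\<alpha> < 1" and p: "0 < p" and q: "0 < q" "q < 1" "2*q < p"
    and H: "\<And>t. 0 < t \<Longrightarrow> t < 1 \<Longrightarrow> T0f \<alpha> t powr (1/p) \<le>
        lamp 1 (\<alpha>*(1-\<alpha>)*(2*t/(1+t^2))^2) powr (1/q) + lamm 1 (\<alpha>*(1-\<alpha>)*(2*t/(1+t^2))^2) powr (1/q)"
  shows False
proof -
  define k where "k = \<alpha>*(1-\<alpha>)"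
  define r where "r = 1/q"
  have k: "0 < k" "k \<le> 1/4"
  proof -
    show "0 < k" unfolding k_def using \<alpha> by simp
    have "0 \<le> (2*\<alpha>-1)^2" by simp
    hence "0 \<le> 4*(\<alpha>*\<alpha>) - 4*\<alpha> + 1" by (simp add: power2_eq_square algebra_simps)
    thus "k \<le> 1/4" unfolding k_def by (simp add: algebra_simps)
  qed
  have r: "1 < r" unfolding r_def using q by simp
  define X where "X t = k*(2*t/(1+t^2))^2" for t :: real
  define mm where "mm t = (2 - (1-t^2)*(2*\<alpha>-1)^2*(2-t)^2/2)/(1+t^2)" for t :: real
  define \<Phi> where "\<Phi> t = r*(4*k/(1+t^2)^2)/(1 + r*X t) - (8*k/(1+t^2)^2) powr r * t powr (2*r - 2)
      - mm t / Lbf \<alpha> t / p" for t :: real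
  have lim: "(\<Phi> \<longlongrightarrow> r*(4*k) - 8*k/p) (at_right 0)"
  proof -
    have X0: "(X \<longlongrightarrow> 0) (at_right 0)" unfolding X_def by (auto intro!: tendsto_eq_intros)
    have c1: "((\<lambda>t. r*(4*k/(1+t^2)^2)/(1 + r*X t)) \<longlongrightarrow> r*(4*k)) (at_right 0)"
      by (auto intro!: tendsto_eq_intros X0)
    have c2: "((\<lambda>t. (8*k/(1+t^2)^2) powr r * t powr (2*r - 2)) \<longlongrightarrow> 0) (at_right 0)"
    proof -
      have "((\<lambda>t. t powr (2*r - 2)) \<longlongrightarrow> 0) (at_right 0)"
        by (rule tendsto_zero_powrI) (use r in \<open>auto intro!: tendsto_intros eventually_at_right_less[THEN eventually_mono]\<close>)
      hence "((\<lambda>t. (8*k/(1+t^2)^2) powr r * t powr (2*r - 2)) \<longlongrightarrow> (8*k/(1+0^2)^2) powr r * 0) (at_right 0)"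
        using k by (intro tendsto_intros) auto
      thus ?thesis by simp
    qed
    have c3: "((\<lambda>t. mm t / Lbf \<alpha> t / p) \<longlongrightarrow> 8*k/p) (at_right 0)"
    proof -
      have "((\<lambda>t. mm t / Lbf \<alpha> t / p) \<longlongrightarrow> mm 0 / Lbf \<alpha> 0 / p) (at_right 0)"
        unfolding mm_def Lbf_def by (intro tendsto_intros; use p in \<open>simp add: add_pos_nonneg\<close>)
      moreover have "mm 0 / Lbf \<alpha> 0 / p = 8*k/p" unfolding mm_def Lbf_def k_def using p
        by (simp add: power2_eq_square field_simps)
      ultimately show ?thesis by simp
    qed
    have "((\<lambda>t. r*(4*k/(1+t^2)^2)/(1 + r*X t) - (8*k/(1+t^2)^2) powr r * t powr (2*r - 2) - mm t / Lbf \<alpha> t / p)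
       \<longlongrightarrow> r*(4*k) - 0 - 8*k/p) (at_right 0)"
      by (rule tendsto_diff[OF tendsto_diff[OF c1 c2] c3])
    thus ?thesis unfolding \<Phi>_def by simp
  qed
  have pos: "0 < r*(4*k) - 8*k/p"
  proof -
    have "2/p < r" unfolding r_def using q p by (simp add: field_simps)
    hence "4*k*(2/p) < 4*k*r" using k by (intro mult_strict_left_mono) auto
    thus ?thesis by (simp add: algebra_simps)
  qed
  have ev: "eventually (\<lambda>t. 0 < \<Phi> t \<and> 0 < t \<and> t < 1/2) (at_right 0)"
  proof -
    have h: "eventually (\<lambda>t::real. t < 1/2) (at_right 0)"
      by (rule eventually_at_right_field[THEN iffD2]) (intro exI[of _ "1/2"], auto)
    show ?thesis using order_tendstoD(1)[OF lim pos] eventually_at_right_less[of "0::real"] h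
      by (intro eventually_conj)
  qed
  then obtain t where t: "0 < \<Phi> t" "0 < t" "t < 1/2"
    using eventually_happens[OF ev] by auto
  have tp: "t^2 > 0" using t by simp
  have tt: "0 < 1 + t^2" by (simp add: add_pos_nonneg)
  have Xt: "X t = 4*k*t^2/(1+t^2)^2" unfolding X_def by (simp add: power_divide power_mult_distrib)
  have Xpos: "0 < X t" unfolding Xt using k t tt by (intro divide_pos_pos mult_pos_pos) auto
  have Xq: "X t \<le> 1/4"
  proof -
    have "(2*t/(1+t^2))^2 \<le> 1"
    proof -
      have "2*t \<le> 1 + t^2" using zero_le_power2[of "t - 1"] by (simp add: power2_eq_square algebra_simps)
      hence "2*t/(1+t^2) \<le> 1" by (simp add: add_pos_nonneg)
      thus ?thesis using t by (intro power_le_one) auto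
    qed
    hence "k*(2*t/(1+t^2))^2 \<le> k" using k by (intro mult_right_le_one_le) auto
    thus ?thesis unfolding X_def using k by linarith
  qed
  have lb: "0 < Lbf \<alpha> t" "1 + (1 - 1/Lbf \<alpha> t)/p \<le> T0f \<alpha> t powr (1/p)"
    using lower_bound[of t p \<alpha>] t p by auto
  have ub: "lamp 1 (X t) powr r + lamm 1 (X t) powr r \<le> 1/(1 + r*X t) + (2*X t) powr r"
    by (rule upper_bound[OF Xpos Xq]) (use r in simp)
  have Ht: "T0f \<alpha> t powr (1/p) \<le> lamp 1 (X t) powr r + lamm 1 (X t) powr r"
    using H[of t] t unfolding X_def k_def r_def by simp
  have main: "1 + (1 - 1/Lbf \<alpha> t)/p \<le> 1/(1 + r*X t) + (2*X t) powr r"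
    using lb ub Ht by linarith
  have e1: "r*(4*k/(1+t^2)^2)/(1 + r*X t) * t^2 = 1 - 1/(1 + r*X t)"
  proof -
    have a: "r*(4*k/(1+t^2)^2)*t^2 = r * X t" unfolding Xt by simp
    have pz: "0 < 1 + r * X t" using Xpos r by (simp add: add_pos_pos)
    have "r*(4*k/(1+t^2)^2)/(1 + r*X t) * t^2 = (r*(4*k/(1+t^2)^2)*t^2)/(1 + r*X t)" by simp
    also have "\<dots> = r * X t / (1 + r * X t)" unfolding a ..
    also have "\<dots> = 1 - 1/(1 + r*X t)" using pz by (simp add: field_simps)
    finally show ?thesis .
  qed
  have e2: "(8*k/(1+t^2)^2) powr r * t powr (2*r - 2) * t^2 = (2*X t) powr r"
  proof -
    have h2: "(2*X t) = (8*k/(1+t^2)^2) * t^2" unfolding Xt using t by (simp add: field_simps)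
    have "(2*X t) powr r = (8*k/(1+t^2)^2) powr r * (t^2) powr r"
      unfolding h2 by (rule powr_mult)
    also have "(t^2) powr r = t powr (2*r)"
    proof -
      have "t powr (2*r) = (t powr 2) powr r" by (simp add: powr_powr)
      also have "t powr 2 = t^2" using t by simp
      finally show ?thesis by simp
    qed
    also have "t powr (2*r) = t powr (2*r - 2) * t^2"
    proof -
      have "t powr (2*r) = t powr (2*r - 2) * t powr 2" by (simp add: powr_add[symmetric])
      thus ?thesis using t by simp
    qed
    finally show ?thesis by simp
  qed
  have e3: "mm t / Lbf \<alpha> t / p * t^2 = (1/Lbf \<alpha> t - 1)/p"
  proof -
    have "1 - Lbf \<alpha> t = t^2 * mm t" unfolding Lbf_def mm_def using tt
      by (simp add: field_simps power2_eq_square)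
    thus ?thesis using lb(1) by (simp add: field_simps)
  qed
  have "\<Phi> t * t^2 = (1 - 1/(1 + r*X t)) - (2*X t) powr r - (1/Lbf \<alpha> t - 1)/p"
    unfolding \<Phi>_def using e1 e2 e3 by (simp add: algebra_simps)
  also have "\<dots> \<le> 0"
  proof -
    have "(1 - 1/Lbf \<alpha> t)/p = - ((1/Lbf \<alpha> t - 1)/p)" by (simp add: minus_divide_left)
    thus ?thesis using main by linarith
  qed
  finally have "\<Phi> t * t^2 \<le> 0" .
  moreover have "0 < \<Phi> t * t^2" using t tp by simp
  ultimately show False by simp
qed

lemma TT_eq:
  fixes t \<alpha> :: real assumes t: "0 < t" "t < 1"
  shows "TT ((1-t^2)/(1+t^2)) (2*t/(1+t^2)) \<alpha> = T0f \<alpha> t"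
proof -
  define c where "c = (1-t^2)/(1+t^2)"
  define s where "s = 2*t/(1+t^2)"
  have tt: "0 < 1 + t^2" by (simp add: add_pos_nonneg)
  have t2: "t^2 < 1"
  proof -
    have "t*t < 1*1" using t by (intro mult_strict_mono) auto
    thus ?thesis by (simp add: power2_eq_square)
  qed
  have c: "0 < c" unfolding c_def using tt t2 by simp
  have s: "0 < s" unfolding s_def using tt t by simp
  define w where "w = sqrt (2*(1+t^2))"
  have w2: "w^2 = 2*(1+t^2)" unfolding w_def using tt by simp
  have wp: "0 < w" unfolding w_def using tt by simp
  define x0 where "x0 = (1-t)/w"
  define y0 where "y0 = (1+t)/w"
  define u where "u = (1+t)/(1-t)"
  have up: "0 < u" unfolding u_def using t by simp
  have x2: "x0^2 = (1-t)^2/(2*(1+t^2))" unfolding x0_def by (simp add: power_divide w2)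
  have y2: "y0^2 = (1+t)^2/(2*(1+t^2))" unfolding y0_def by (simp add: power_divide w2)
  have ww: "w*w = 2*(1+t^2)" using w2 by (simp add: power2_eq_square)
  have xy: "x0*y0 = (1-t)*(1+t)/(2*(1+t^2))" unfolding x0_def y0_def ww[symmetric] by simp
  have xy1: "x0^2 + y0^2 = 1"
  proof -
    have "(1-t)^2 + (1+t)^2 = 2*(1+t^2)" by (simp add: power2_eq_square algebra_simps)
    hence "x0^2 + y0^2 = (2*(1+t^2))/(2*(1+t^2))" unfolding x2 y2 by (simp add: add_divide_distrib[symmetric])
    thus ?thesis using tt by simp
  qed
  have t1: "1 - t \<noteq> 0" "1 + t \<noteq> 0" using t by auto
  have ua: "(1-t)^2 * u = (1-t)*(1+t)" unfolding u_def using t1 by (simp add: power2_eq_square)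
  have ub: "(1+t)^2 * (1/u) = (1-t)*(1+t)" unfolding u_def using t1 by (simp add: power2_eq_square)
  have uc: "(1+t)^2 * u = (1+t)^3/(1-t)" unfolding u_def using t1 by (simp add: power2_eq_square power3_eq_cube)
  have ud: "(1-t)^2 * (1/u) = (1-t)^3/(1+t)" unfolding u_def using t1 by (simp add: power2_eq_square power3_eq_cube)
  have e11: "x0^2 * u + y0^2 * (1/u) = c"
  proof -
    have "x0^2 * u + y0^2 * (1/u) = ((1-t)^2 * u + (1+t)^2 * (1/u)) / (2*(1+t^2))"
      unfolding x2 y2 by (simp add: add_divide_distrib)
    also have "\<dots> = c" unfolding ua ub c_def using tt by (simp add: field_simps power2_eq_square)
    finally show ?thesis .
  qed
  have e12: "x0*y0*(u - 1/u) = s"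
  proof -
    have "u - 1/u = ((1+t)^2 - (1-t)^2)/((1-t)*(1+t))" unfolding u_def using t1 by (simp add: field_simps power2_eq_square)
    also have "\<dots> = 4*t/((1-t)*(1+t))" by (simp add: power2_eq_square algebra_simps)
    finally have h: "u - 1/u = 4*t/((1-t)*(1+t))" .
    have gen: "P/(2*Q) * (4*t/P) = 2*t/Q" if "P \<noteq> 0" "Q \<noteq> 0" for P Q :: real
      using that by (simp add: field_simps)
    have "(1-t)*(1+t)/(2*(1+t^2)) * (4*t/((1-t)*(1+t))) = 2*t/(1+t^2)"
      using t1 tt by (intro gen) auto
    thus ?thesis unfolding xy h s_def .
  qed
  have e22: "y0^2 * u + x0^2 * (1/u) = (s^2+1)/c"
  proof -
    have "y0^2 * u + x0^2 * (1/u) = ((1+t)^2 * u + (1-t)^2 * (1/u)) / (2*(1+t^2))"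
      unfolding x2 y2 by (simp add: add_divide_distrib)
    also have "\<dots> = ((1+t)^3/(1-t) + (1-t)^3/(1+t)) / (2*(1+t^2))" unfolding uc ud ..
    also have "\<dots> = (1 + 6*t^2 + t^4) / ((1-t)*(1+t)*(1+t^2))"
    proof -
      have gen: "(b^3/a + a^3/b)/(2*Q) = (b^4 + a^4)/(2*(a*b*Q))" if "a \<noteq> 0" "b \<noteq> 0" "Q \<noteq> 0" for a b Q :: real
        using that by (simp add: field_simps power2_eq_square power3_eq_cube) (simp add: algebra_simps eval_nat_numeral)
      have "((1+t)^3/(1-t) + (1-t)^3/(1+t)) / (2*(1+t^2)) = ((1+t)^4 + (1-t)^4)/(2*((1-t)*(1+t)*(1+t^2)))"
        by (rule gen) (use t1 tt in auto)
      also have "(1+t)^4 + (1-t)^4 = 2*(1 + 6*t^2 + t^4)" by (simp add: eval_nat_numeral algebra_simps)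
      finally have X: "((1+t)^3/(1-t) + (1-t)^3/(1+t)) / (2*(1+t^2)) = 2*(1 + 6*t^2 + t^4) / (2*((1-t)*(1+t)*(1+t^2)))" .
      show ?thesis unfolding X by (rule mult_divide_mult_cancel_left) simp
    qed
    also have "\<dots> = (s^2+1)/c"
    proof -
      have gen: "((2*t/Q)^2 + 1)/(R/Q) = ((2*t)^2 + Q^2)/(Q*R)" if "Q \<noteq> 0" "R \<noteq> 0" for Q R :: real
        using that by (simp add: field_simps power2_eq_square)
      have R: "1 - t^2 \<noteq> 0" using t2 by simp
      have "(s^2+1)/c = ((2*t)^2 + (1+t^2)^2)/((1+t^2)*(1-t^2))" unfolding s_def c_def
        by (rule gen) (use tt R in auto)
      also have "(2*t)^2 + (1+t^2)^2 = 1 + 6*t^2 + t^4" by (simp add: power2_eq_square algebra_simps eval_nat_numeral)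
      also have "(1+t^2)*(1-t^2) = (1-t)*(1+t)*(1+t^2)" by (simp add: power2_eq_square algebra_simps)
      finally show ?thesis ..
    qed
    finally show ?thesis .
  qed
  have GL: "rm c s s ((s^2+1)/c) = rot x0 y0 ** rdiag (diag2 u (1/u)) ** cadj (rot x0 y0)"
    unfolding conj_rot using e11 e12 e22 by simp
  have M1: "mpow (rm c s s ((s^2+1)/c)) \<alpha> = rot x0 y0 ** rdiag (diag2 (u powr \<alpha>) ((1/u) powr \<alpha>)) ** cadj (rot x0 y0)"
    unfolding GL by (rule conj_mpow[OF xy1]) (use up in auto)
  have g2: "s^2 < c * ((s^2+1)/c)" using c by simp
  have g3: "(c - (s^2+1)/c)^2 + 4 * s^2 \<noteq> 0"
  proof -
    have "0 < (c - (s^2+1)/c)^2 + 4 * s^2" using s by (simp add: add_nonneg_pos)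
    thus ?thesis by simp
  qed
  have M2: "mpow (rm c s s ((s^2+1)/c)) \<alpha> = rm (kAL c s \<alpha> * c + kBL c s \<alpha>) (kAL c s \<alpha> * s) (kAL c s \<alpha> * s) (kAL c s \<alpha> * ((s^2+1)/c) + kBL c s \<alpha>)"
    unfolding kAL_def kBL_def L1_def L2_def gT_def gD_def
    by (rule mpow_rm_lagrange[OF c g2 g3])
  define f1 where "f1 = u powr \<alpha>"
  define f2 where "f2 = (1/u) powr \<alpha>"
  have E: "kAL c s \<alpha> * c + kBL c s \<alpha> = x0^2 * f1 + y0^2 * f2" "kAL c s \<alpha> * s = x0*y0*(f1 - f2)"
    using M1[unfolded M2 conj_rot] unfolding f1_def f2_def by simp_all
  have "TT c s \<alpha> = (x0^2 * f1 + y0^2 * f2)^2 + (x0*y0*(f1 - f2))^2" unfolding TT_def E ..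
  also have "\<dots> = x0^2 * f1^2 * (x0^2+y0^2) + y0^2 * f2^2 * (x0^2+y0^2)"
    by (simp add: power2_eq_square algebra_simps)
  also have "\<dots> = x0^2 * f1^2 + y0^2 * f2^2" unfolding xy1 by simp
  also have "\<dots> = T0f \<alpha> t" unfolding T0f_def x2 y2 f1_def f2_def u_def by simp
  finally show ?thesis unfolding c_def s_def .
qed

lemma limit_ineq:
  fixes \<alpha> p q t :: real
  assumes \<alpha>: "0 < \<alpha>" "\<alpha> < 1" and p: "0 < p" and q: "0 < q" and t: "0 < t" "t < 1"
    and H: "\<forall>A B :: complex^2^2. posdef A \<and> posdef B \<longrightarrow>
           Re (trace (SG \<alpha> p A B)) \<le> Re (trace (AM \<alpha> q A B))"
  shows "T0f \<alpha> t powr (1/p) \<le> lamp 1 (\<alpha>*(1-\<alpha>)*(2*t/(1+t^2))^2) powr (1/q) + lamm 1 (\<alpha>*(1-\<alpha>)*(2*t/(1+t^2))^2) powr (1/q)"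
proof -
  define c where "c = (1-t^2)/(1+t^2)"
  define s where "s = 2*t/(1+t^2)"
  have tt: "0 < 1 + t^2" by (simp add: add_pos_nonneg)
  have t2: "t^2 < 1"
  proof -
    have "t*t < 1*1" using t by (intro mult_strict_mono) auto
    thus ?thesis by (simp add: power2_eq_square)
  qed
  have c: "0 < c" unfolding c_def using tt t2 by simp
  have s: "0 < s" unfolding s_def using tt t by simp
  have cs: "c^2 + s^2 = 1"
  proof -
    have "(1-t^2)^2 + (2*t)^2 = (1+t^2)^2" by (simp add: power2_eq_square algebra_simps)
    hence "((1-t^2)^2 + (2*t)^2)/(1+t^2)^2 = 1" using tt by simp
    thus ?thesis unfolding c_def s_def by (simp add: power_divide add_divide_distrib)
  qed
  have lim0: "((\<lambda>e. e powr r) \<longlongrightarrow> 0) (at_right (0::real))" if r: "0 < r" for r :: real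
    by (rule tendsto_zero_powrI) (use r in \<open>auto intro!: tendsto_intros eventually_at_right_less[THEN eventually_mono]\<close>)
  have pos0: "eventually (\<lambda>e. 0 < e powr r) (at_right (0::real))" for r :: real
    using eventually_at_right_less[of "0::real"] by eventually_elim simp
  have ev: "eventually (\<lambda>e. SGtr \<alpha> c s (e powr p) p \<le> AMtr \<alpha> c s (e powr q) q) (at_right 0)"
    using ev_G[OF cs c s lim0[OF p] pos0] ev_M[OF cs c s lim0[OF q] pos0 \<alpha>] eventually_at_right_less[of "0::real"]
  proof eventually_elim
    case (elim e)
    have pA: "posdef (rm 1 0 0 e)" by (rule posdef_rm) (use elim in auto)
    have pB: "posdef (Bm c s e)" by (rule posdef_Bm[OF cs c]) (use elim in auto)
    have "Re (trace (SG \<alpha> p (rm 1 0 0 e) (Bm c s e))) \<le> Re (trace (AM \<alpha> q (rm 1 0 0 e) (Bm c s e)))"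
      using H pA pB by blast
    moreover have "Re (trace (SG \<alpha> p (rm 1 0 0 e) (Bm c s e))) = SGtr \<alpha> c s (e powr p) p"
      by (rule SG_trace[OF cs c]) (use elim in auto)
    moreover have "Re (trace (AM \<alpha> q (rm 1 0 0 e) (Bm c s e))) = AMtr \<alpha> c s (e powr q) q"
      by (rule AM_trace[OF cs]) (use elim in auto)
    ultimately show ?case by simp
  qed
  have l1: "((\<lambda>e. SGtr \<alpha> c s (e powr p) p) \<longlongrightarrow> TT c s \<alpha> powr (1/p)) (at_right 0)"
    by (rule lim_SG[OF cs c s lim0[OF p] pos0 p])
  have l2: "((\<lambda>e. AMtr \<alpha> c s (e powr q) q) \<longlongrightarrow> lamp 1 (\<alpha>*(1-\<alpha>)* s^2) powr (1/q) + lamm 1 (\<alpha>*(1-\<alpha>)* s^2) powr (1/q)) (at_right 0)"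
    by (rule lim_AM[OF cs c s lim0[OF q] pos0 q \<alpha>])
  have "TT c s \<alpha> powr (1/p) \<le> lamp 1 (\<alpha>*(1-\<alpha>)* s^2) powr (1/q) + lamm 1 (\<alpha>*(1-\<alpha>)* s^2) powr (1/q)"
    by (rule tendsto_le[OF _ l2 l1 ev]) simp
  thus ?thesis unfolding c_def s_def TT_eq[OF t] .
qed

theorem theorem4p29:
  fixes \<alpha> p q :: real
  assumes "0 < \<alpha>" and "\<alpha> < 1" and "0 < p" and "0 < q"
    and "\<forall>A B :: complex^2^2. posdef A \<and> posdef B \<longrightarrow>
           Re (trace (SG \<alpha> p A B)) \<le> Re (trace (AM \<alpha> q A B))"
  shows "min 1 (p / 2) \<le> q"
proof (rule ccontr)
  assume "\<not> min 1 (p / 2) \<le> q"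
  hence q1: "q < 1" and q2: "2*q < p" by auto
  show False
    by (rule analysis_contra[OF assms(1,2,3,4) q1 q2 limit_ineq[OF assms(1,2,3,4) _ _ assms(5)]])
qed

end
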